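(* Let $\Bbbk$ be an algebraically closed field of arbitrary characteristic, $V=\Bbbk^n$, $G=\mathrm{GL}(V)$ with its natural representation $\eta$ on $V$, and let $\underline{G}=G\ltimes_\eta V$ be the enhanced group, i.e. the variety $G\times V$ with product $(g_1,v_1)\cdot(g_2,v_2)=(g_1g_2,\ g_1v_2+v_1)$. Its Lie algebra is $\underline{\mathfrak g}=\mathfrak{gl}(V)\times V$, with adjoint action $\mathrm{Ad}(g,v)(X,w)=(\mathrm{Ad}(g)X,\ -(\mathrm{Ad}(g)X)v+gw)$, and its nilpotent cone is $\underline{\mathcal N}=\mathcal N\times V$, where $\mathcal N$ is the nilpotent cone of $\mathfrak{gl}(V)$. For a partition $\lambda$ of $n$ write $\lambda=(a_1\ge a_2\ge\cdots\ge a_t>0)=(b_1^{d_1}b_2^{d_2}\cdots b_r^{d_r})$ with $b_1>b_2>\cdots>b_r>0$, each $b_j$ occurring $d_j>0$ times, and set $d_0=0$. An enhanced partition of $n$ is a pair $\lambda[q]$ with $\lambda$ a partition of $n$ and $q\in\{d_0+d_1+\cdots+d_{j-1}\mid j=1,\dots,r+1\}$; let $\mathscr P_n^{e}$ denote the set of all enhanced partitions of $n$. Let $J_\lambda$ be the Jordan standard nilpotent matrix of type $\lambda$, with Jordan basis $\{J_\lambda^k v_i\mid 1\le i\le t,\ 0\le k\le a_i-1\}$ (so $J_\lambda^{a_i}v_i=0$), and put $u_j=v_{d_1+\cdots+d_j}$ for $j=1,\dots,r$ and $u_{r+1}=0$. For $q=d_0+\cdots+d_{j-1}$ let $\mathcal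 O_{\lambda[q]}$ be the $\underline G$-orbit of $(J_\lambda,u_j)$ in $\underline{\mathcal N}$ under the adjoint action (for $\lambda=(1^n)$, i.e. $J_\lambda=0$, this gives $\mathcal O_{(1^n)[0]}=\{0\}\times(V\setminus\{0\})$ and $\mathcal O_{(1^n)[n]}=\{(0,0)\}$). Then $\{\mathcal O_{\lambda[q]}\mid \lambda[q]\in\mathscr P_n^{e}\}$ is the complete set of nilpotent orbits in $\underline{\mathcal N}$ under the adjoint $\underline G$-action, these orbits being pairwise distinct; that is, the $\underline G$-orbits in $\underline{\mathcal N}$ are parameterized by the enhanced partitions of $n$, equivalently by the set $\{(\lambda,q)\mid \lambda=(b_1^{d_1}\cdots b_r^{d_r})\text{ a partition of } n,\ q=d_0+d_1+\cdots+d_{j-1},\ j=1,\dots,r+1\}$.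
   Context: Enhanced reductive group associated with the natural representation of $\mathrm{GL}_n$: $\underline G=\mathrm{GL}(V)\ltimes_\eta V$, $\underline{\mathfrak g}=\mathfrak{gl}(V)\times V$ with bracket $[(X_1,v_1),(X_2,v_2)]=([X_1,X_2],X_1v_2-X_2v_1)$; the ground field $\Bbbk$ is algebraically closed of any characteristic. *)

theory Defs
  imports "Jordan_Normal_Form.Jordan_Normal_Form" "HOL-Computational_Algebra.Polynomial"
begin

definition alg_closed :: "'a :: field itself \<Rightarrow> bool" where
  "alg_closed TYPE('a) \<longleftrightarrow> (\<forall>p :: 'a poly. degree p > 0 \<longrightarrow> (\<exists>x. poly p x = 0))"

definition is_partition :: "nat \<Rightarrow> nat list \<Rightarrow> bool" where
  "is_partition n lam \<longleftrightarrow> sorted_wrt (\<ge>) lam \<and> (\<forall>a \<in> set lam. 0 < a) \<and> sum_list lam = n"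

text \<open>Admissible q for lam = (b_1^d_1 ... b_r^d_r): q = d_0 + ... + d_(j-1), j = 1..r+1.
  For j \<le> r this is the number of parts strictly larger than b_j; for j = r+1 it is t = length lam.\<close>
definition enh_q :: "nat list \<Rightarrow> nat set" where
  "enh_q lam = {length (filter (\<lambda>a. b < a) lam) | b. b \<in> set lam} \<union> {length lam}"

definition enhanced_partitions :: "nat \<Rightarrow> (nat list \<times> nat) set" where
  "enhanced_partitions n = {(lam, q). is_partition n lam \<and> q \<in> enh_q lam}"

text \<open>Jordan standard nilpotent matrix of type lam (library convention: ones on the superdiagonal).\<close>
definition J_part :: "nat list \<Rightarrow> 'a :: field mat" where
  "J_part lam = jordan_matrix (map (\<lambda>a. (a, 0)) lam)"

text \<open>Generator v_(i+1) (0-indexed i) of the i-th Jordan block: J^k v_i run through the block,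
  J^(a_i) v_i = 0. With the superdiagonal convention it is the last basis vector of the block.\<close>
definition jordan_gen :: "nat \<Rightarrow> nat list \<Rightarrow> nat \<Rightarrow> 'a :: field vec" where
  "jordan_gen n lam i = unit_vec n (sum_list (take (Suc i) lam) - 1)"

text \<open>u_j = v_(d_1+...+d_j) = v_(q+1) for q = d_0+...+d_(j-1) < t, and u_(r+1) = 0 (q = t).\<close>
definition u_vec :: "nat \<Rightarrow> nat list \<Rightarrow> nat \<Rightarrow> 'a :: field vec" where
  "u_vec n lam q = (if q < length lam then jordan_gen n lam q else 0\<^sub>v n)"

definition enh_nilcone :: "nat \<Rightarrow> ('a :: field mat \<times> 'a vec) set" where
  "enh_nilcone n = {(X, w). X \<in> carrier_mat n n \<and> (\<exists>m. X ^\<^sub>m m = 0\<^sub>m n n) \<and> w \<in> carrier_vec n}"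

text \<open>Adjoint action of (g,v) in GL_n \<ltimes> k^n: Ad(g,v)(X,w) = (g X g^-1, -(g X g^-1) v + g w).
  Here h is the inverse of g.\<close>
definition enh_orbit :: "nat \<Rightarrow> 'a :: field mat \<times> 'a vec \<Rightarrow> ('a mat \<times> 'a vec) set" where
  "enh_orbit n xw = {(g * fst xw * h, - ((g * fst xw * h) *\<^sub>v v) + g *\<^sub>v snd xw) | g h v.
      g \<in> carrier_mat n n \<and> h \<in> carrier_mat n n \<and> g * h = 1\<^sub>m n \<and> h * g = 1\<^sub>m n \<and> v \<in> carrier_vec n}"

definition O_enh :: "nat \<Rightarrow> nat list \<Rightarrow> nat \<Rightarrow> ('a :: field mat \<times> 'a vec) set" where
  "O_enh n lam q = enh_orbit n (J_part lam, u_vec n lam q)"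

end

theory Submission
  imports Defs "HOL-Combinatorics.Permutations" "Jordan_Normal_Form.Jordan_Normal_Form_Uniqueness"
    "Jordan_Normal_Form.Jordan_Normal_Form_Existence"
begin

definition pmat :: "nat \<Rightarrow> (nat \<Rightarrow> nat option) \<Rightarrow> 'a::field mat" where
  "pmat n f = mat n n (\<lambda>(p,q). if f q = Some p then 1 else 0)"

definition pclosed :: "nat \<Rightarrow> (nat \<Rightarrow> nat option) \<Rightarrow> bool" where
  "pclosed n f \<longleftrightarrow> (\<forall>q<n. \<forall>p. f q = Some p \<longrightarrow> p < n)"

definition pcomp :: "(nat \<Rightarrow> nat option) \<Rightarrow> (nat \<Rightarrow> nat option) \<Rightarrow> nat \<Rightarrow> nat option" where
  "pcomp g f q = (case f q of None \<Rightarrow> None | Some r \<Rightarrow> g r)"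

lemma pmat_carrier[simp]: "pmat n f \<in> carrier_mat n n" by (simp add: pmat_def)
lemma pmat_dims[simp]: "dim_row (pmat n f) = n" "dim_col (pmat n f) = n" by (auto simp add: pmat_def)
lemma pmat_index[simp]: "p < n \<Longrightarrow> q < n \<Longrightarrow> pmat n f $$ (p,q) = (if f q = Some p then 1 else 0)"
  by (simp add: pmat_def)

lemma pmat_cong: "(\<And>q. q < n \<Longrightarrow> f q = g q) \<Longrightarrow> pmat n f = pmat n g"
  by (rule eq_matI) auto

lemma pmat_mult: assumes "pclosed n f"
  shows "pmat n g * pmat n f = (pmat n (pcomp g f) :: 'a::field mat)"
proof (rule eq_matI)
  fix p q assume "p < dim_row (pmat n (pcomp g f) :: 'a mat)" "q < dim_col (pmat n (pcomp g f) :: 'a mat)"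
  hence pn: "p < n" "q < n" by auto
  have "(pmat n g * pmat n f :: 'a mat) $$ (p,q) = (\<Sum>r\<in>{0..<n}. (if g r = Some p then 1 else 0) * (if f q = Some r then 1 else 0))"
    using pn by (simp add: scalar_prod_def)
  also have "\<dots> = (pmat n (pcomp g f) :: 'a mat) $$ (p,q)"
  proof (cases "f q")
    case None thus ?thesis using pn by (simp add: pcomp_def)
  next
    case (Some r0)
    with assms pn have r0: "r0 < n" by (auto simp: pclosed_def)
    have "(\<Sum>r\<in>{0..<n}. (if g r = Some p then 1 else 0) * (if f q = Some r then 1 else 0))
        = (\<Sum>r\<in>{0..<n}. if r = r0 then (if g r0 = Some p then 1 else 0) else (0::'a))"
      by (rule sum.cong) (auto simp: Some)
    also have "\<dots> = (if g r0 = Some p then 1 else 0)" using r0 by simp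
    finally show ?thesis using pn Some by (simp add: pcomp_def)
  qed
  finally show "(pmat n g * pmat n f :: 'a mat) $$ (p,q) = (pmat n (pcomp g f) :: 'a mat) $$ (p,q)" .
qed auto

lemma pmat_Some: "pmat n Some = (1\<^sub>m n :: 'a::field mat)"
  by (rule eq_matI) auto

lemma pmat_None: "pmat n (\<lambda>_. None) = (0\<^sub>m n n :: 'a::field mat)"
  by (rule eq_matI) auto

lemma pmat_mult_vec: assumes "p < n" "v \<in> carrier_vec n"
  shows "(pmat n f *\<^sub>v v) $ p = (\<Sum>q\<in>{0..<n}. if f q = Some p then (v $ q :: 'a::field) else 0)"
proof -
  have "(pmat n f *\<^sub>v v) $ p = row (pmat n f) p \<bullet> v" using assms by simp
  also have "\<dots> = (\<Sum>q\<in>{0..<n}. (pmat n f :: 'a mat) $$ (p, q) * v $ q)"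
    using assms by (simp add: scalar_prod_def)
  also have "\<dots> = (\<Sum>q\<in>{0..<n}. if f q = Some p then (v $ q :: 'a::field) else 0)"
    using assms by (intro sum.cong) auto
  finally show ?thesis .
qed

lemma pmat_mult_vec_unique: assumes "p < n" "v \<in> carrier_vec n" "q0 < n" "f q0 = Some p" "\<And>q. q < n \<Longrightarrow> f q = Some p \<Longrightarrow> q = q0"
  shows "(pmat n f *\<^sub>v v) $ p = (v $ q0 :: 'a::field)"
proof -
  have "(pmat n f *\<^sub>v v) $ p = (\<Sum>q\<in>{0..<n}. if q = q0 then v $ q0 else 0)"
    unfolding pmat_mult_vec[OF assms(1,2)]
  proof (rule sum.cong[OF refl])
    fix q assume "q \<in> {0..<n}"
    thus "(if f q = Some p then v $ q else 0) = (if q = q0 then v $ q0 else 0)"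
    proof (cases "f q = Some p")
      case True
      hence "q = q0" using assms(5)[of q] \<open>q \<in> {0..<n}\<close> by simp
      thus ?thesis using assms(4) by simp
    next
      case False
      hence "q \<noteq> q0" using assms(4) by metis
      thus ?thesis using False by simp
    qed
  qed
  thus ?thesis using assms(3) by simp
qed

lemma pmat_mult_vec_none: assumes "p < n" "v \<in> carrier_vec n" "\<And>q. q < n \<Longrightarrow> f q \<noteq> Some p"
  shows "(pmat n f *\<^sub>v v) $ p = (0 :: 'a::field)"
  unfolding pmat_mult_vec[OF assms(1,2)] using assms(3) by (intro sum.neutral) (auto simp del: not_None_eq)

fun dec :: "nat list \<Rightarrow> nat \<Rightarrow> nat \<times> nat" where
  "dec [] p = (0, p)"
| "dec (a # as) p = (if p < a then (0, p) else (case dec as (p - a) of (i, s) \<Rightarrow> (Suc i, s)))"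

definition pos :: "nat list \<Rightarrow> nat \<Rightarrow> nat \<Rightarrow> nat" where
  "pos lam i s = sum_list (take i lam) + s"

lemma pos_Cons0[simp]: "pos (a # lam) 0 s = s" by (simp add: pos_def)
lemma pos_ConsS[simp]: "pos (a # lam) (Suc i) s = a + pos lam i s" by (simp add: pos_def)

lemma dec_pos: "i < length lam \<Longrightarrow> s < lam ! i \<Longrightarrow> dec lam (pos lam i s) = (i, s)"
proof (induction lam arbitrary: i)
  case Nil thus ?case by simp
next
  case (Cons a lam) thus ?case by (cases i) auto
qed

lemma pos_dec: "p < sum_list lam \<Longrightarrow> dec lam p = (i, s) \<Longrightarrow> i < length lam \<and> s < lam ! i \<and> pos lam i s = p"
proof (induction lam arbitrary: p i s)
  case Nil thus ?case by simp
next
  case (Cons a lam)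
  show ?case
  proof (cases "p < a")
    case True thus ?thesis using Cons.prems by auto
  next
    case False
    obtain i' s' where d: "dec lam (p - a) = (i', s')" by fastforce
    with Cons.prems False have "i = Suc i'" "s = s'" by auto
    moreover have "i' < length lam \<and> s' < lam ! i' \<and> pos lam i' s' = p - a"
      using Cons.IH[OF _ d] Cons.prems False by auto
    ultimately show ?thesis using False by auto
  qed
qed

lemma pos_lt: "i < length lam \<Longrightarrow> s < lam ! i \<Longrightarrow> pos lam i s < sum_list lam"
proof (induction lam arbitrary: i)
  case Nil thus ?case by simp
next
  case (Cons a lam) thus ?case by (cases i) auto
qed

lemma pos_eq_iff: "i < length lam \<Longrightarrow> s < lam ! i \<Longrightarrow> i' < length lam \<Longrightarrow> s' < lam ! i' \<Longrightarrow>
  pos lam i s = pos lam i' s' \<longleftrightarrow> i = i' \<and> s = s'"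
proof
  assume a: "i < length lam" "s < lam ! i" "i' < length lam" "s' < lam ! i'" and "pos lam i s = pos lam i' s'"
  hence "dec lam (pos lam i s) = dec lam (pos lam i' s')" by simp
  thus "i = i' \<and> s = s'" unfolding dec_pos[OF a(1,2)] dec_pos[OF a(3,4)] by simp
qed auto

lemma decE: assumes "p < sum_list lam"
  obtains i s where "i < length lam" "s < lam ! i" "p = pos lam i s" "dec lam p = (i, s)"
proof -
  obtain i s where d: "dec lam p = (i, s)" by fastforce
  from pos_dec[OF assms d] d that show ?thesis by metis
qed

definition jsh :: "nat list \<Rightarrow> nat \<Rightarrow> nat option" where
  "jsh lam q = (case dec lam q of (i, s) \<Rightarrow> if s = 0 then None else Some (pos lam i (s - 1)))"

lemma jsh_pos: "i < length lam \<Longrightarrow> s < lam ! i \<Longrightarrow> jsh lam (pos lam i s) = (if s = 0 then None else Some (pos lam i (s - 1)))"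
  by (simp add: jsh_def dec_pos)

lemma jsh_Cons: "jsh (a # lam) q = (if q < a then (if q = 0 then None else Some (q - 1)) else map_option ((+) a) (jsh lam (q - a)))"
proof (cases "q < a")
  case True thus ?thesis by (simp add: jsh_def)
next
  case False
  obtain i s where d: "dec lam (q - a) = (i, s)" by fastforce
  show ?thesis using False by (simp add: jsh_def d)
qed

lemma J_part_dim: "J_part lam \<in> carrier_mat (sum_list lam) (sum_list lam)"
  unfolding J_part_def carrier_mat_def by (simp add: comp_def)

lemma J_part_Nil: "J_part [] = 0\<^sub>m 0 0" by (simp add: J_part_def jordan_matrix_def)

lemma J_part_Cons: "(J_part (a # lam) :: 'a::field mat) = four_block_mat (jordan_block a 0) (0\<^sub>m a (sum_list lam)) (0\<^sub>m (sum_list lam) a) (J_part lam)"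
proof -
  have "dim_row (J_part lam :: 'a mat) = sum_list lam" "dim_col (J_part lam :: 'a mat) = sum_list lam"
    using J_part_dim[of lam] by auto
  thus ?thesis by (simp add: J_part_def jordan_matrix_def Let_def)
qed

lemma J_part_pmat: "(J_part lam :: 'a::field mat) = pmat (sum_list lam) (jsh lam)"
proof (induction lam)
  case Nil thus ?case by (auto simp: J_part_Nil intro!: eq_matI)
next
  case (Cons a lam)
  show ?case unfolding J_part_Cons
  proof (rule eq_matI)
    fix p q assume p: "p < dim_row (pmat (sum_list (a # lam)) (jsh (a # lam)) :: 'a mat)"
      and q: "q < dim_col (pmat (sum_list (a # lam)) (jsh (a # lam)) :: 'a mat)"
    hence pq: "p < a + sum_list lam" "q < a + sum_list lam" by auto
    show "four_block_mat (jordan_block a 0) (0\<^sub>m a (sum_list lam)) (0\<^sub>m (sum_list lam) a) (J_part lam) $$ (p, q) =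
         (pmat (sum_list (a # lam)) (jsh (a # lam)) :: 'a mat) $$ (p, q)"
    proof -
      have JL: "J_part lam \<in> carrier_mat (sum_list lam) (sum_list lam)" by (rule J_part_dim)
      hence JLd: "dim_row (J_part lam :: 'a mat) = sum_list lam" "dim_col (J_part lam :: 'a mat) = sum_list lam" by auto
      have L: "four_block_mat (jordan_block a 0) (0\<^sub>m a (sum_list lam)) (0\<^sub>m (sum_list lam) a) (J_part lam) $$ (p, q)
        = (if p < a then if q < a then jordan_block a (0::'a) $$ (p,q) else 0 else if q < a then 0 else J_part lam $$ (p-a, q-a))"
        using pq JL JLd by (subst index_mat_four_block) auto
      have R: "(pmat (sum_list (a # lam)) (jsh (a # lam)) :: 'a mat) $$ (p, q) = (if jsh (a # lam) q = Some p then 1 else 0)"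
        using pq by simp
      have e: "J_part lam $$ (p-a, q-a) = (if jsh lam (q-a) = Some (p-a) then 1 else (0::'a))"
        if a1: "\<not> p < a" "\<not> q < a"
      proof -
        have "J_part lam $$ (p-a, q-a) = (pmat (sum_list lam) (jsh lam) :: 'a mat) $$ (p-a, q-a)" using Cons.IH by simp
        also have "\<dots> = (if jsh lam (q-a) = Some (p-a) then 1 else 0)" using pq a1 by simp
        finally show ?thesis .
      qed
      have mo: "(map_option ((+) a) (jsh lam (q - a)) = Some p) = (jsh lam (q-a) = Some (p-a))" if "\<not> p < a"
        using that by (cases "jsh lam (q - a)") auto
      show ?thesis unfolding L R using e mo by (auto simp: jsh_Cons)
    qed
  qed (use J_part_dim[of lam] in auto)
qed

lemma mult_mat_vec_uminus: "A \<in> carrier_mat nr nc \<Longrightarrow> v \<in> carrier_vec nc \<Longrightarrow> A *\<^sub>v (- v) = - (A *\<^sub>v (v :: 'a::field vec))"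
  by (intro eq_vecI) auto

lemma mult_mat_vec_zero: "A \<in> carrier_mat nr nc \<Longrightarrow> A *\<^sub>v 0\<^sub>v nc = (0\<^sub>v nr :: 'a::field vec)"
  by (intro eq_vecI) auto

lemma sq_mult[simp]: "A \<in> carrier_mat n n \<Longrightarrow> B \<in> carrier_mat n n \<Longrightarrow> A * B \<in> carrier_mat n n"
  by (rule mult_carrier_mat)
lemma sq_pow[simp]: "A \<in> carrier_mat n n \<Longrightarrow> A ^\<^sub>m k \<in> carrier_mat n n"
  unfolding carrier_mat_def by auto
lemma sq_assoc: "A \<in> carrier_mat n n \<Longrightarrow> B \<in> carrier_mat n n \<Longrightarrow> C \<in> carrier_mat n n \<Longrightarrow> A * B * C = A * (B * C)"
  by (rule assoc_mult_mat)
lemma sq_assoc_vec: "A \<in> carrier_mat n n \<Longrightarrow> B \<in> carrier_mat n n \<Longrightarrow> v \<in> carrier_vec n \<Longrightarrow> (A * B) *\<^sub>v v = A *\<^sub>v (B *\<^sub>v v)"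
  by (rule assoc_mult_mat_vec)
lemma sq_mult_vec[simp]: "A \<in> carrier_mat n n \<Longrightarrow> v \<in> carrier_vec n \<Longrightarrow> A *\<^sub>v v \<in> carrier_vec n"
  by (rule mult_mat_vec_carrier)
lemma inv_cancel: assumes "h * g = 1\<^sub>m n" "h \<in> carrier_mat n n" "g \<in> carrier_mat n n" "(Z :: 'a :: field mat) \<in> carrier_mat n nc"
  shows "h * (g * Z) = Z"
proof -
  have "h * (g * Z) = (h * g) * Z" using assms by (rule_tac assoc_mult_mat[symmetric]) auto
  also have "\<dots> = Z" unfolding assms(1) by (rule left_mult_one_mat[OF assms(4)])
  finally show ?thesis .
qed
lemma inv_cancel_vec: assumes "h * g = 1\<^sub>m n" "h \<in> carrier_mat n n" "g \<in> carrier_mat n n" "(v :: 'a :: field vec) \<in> carrier_vec n"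
  shows "h *\<^sub>v (g *\<^sub>v v) = v"
proof -
  have "h *\<^sub>v (g *\<^sub>v v) = (h * g) *\<^sub>v v" using assms by (rule_tac assoc_mult_mat_vec[symmetric]) auto
  also have "\<dots> = v" unfolding assms(1) by (rule one_mult_mat_vec[OF assms(4)])
  finally show ?thesis .
qed

definition orel :: "nat \<Rightarrow> ('a::field mat \<times> 'a vec) \<Rightarrow> ('a mat \<times> 'a vec) \<Rightarrow> bool" where
  "orel n xw yu \<longleftrightarrow> (\<exists>g h v. g \<in> carrier_mat n n \<and> h \<in> carrier_mat n n \<and> g * h = 1\<^sub>m n \<and> h * g = 1\<^sub>m n \<and> v \<in> carrier_vec n \<and>
      yu = (g * fst xw * h, - ((g * fst xw * h) *\<^sub>v v) + g *\<^sub>v snd xw))"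

definition incar :: "nat \<Rightarrow> ('a::field mat \<times> 'a vec) \<Rightarrow> bool" where
  "incar n xw \<longleftrightarrow> fst xw \<in> carrier_mat n n \<and> snd xw \<in> carrier_vec n"

lemma enh_orbit_orel: "enh_orbit n xw = {yu. orel n xw yu}"
  unfolding enh_orbit_def orel_def by blast

lemma orelI: assumes "g \<in> carrier_mat n n" "h \<in> carrier_mat n n" "g * h = 1\<^sub>m n" "h * g = 1\<^sub>m n" "v \<in> carrier_vec n"
  "Y = g * X * h" "u = - (Y *\<^sub>v v) + g *\<^sub>v w"
  shows "orel n (X, w) (Y, u)"
  unfolding orel_def using assms by auto

lemma orelE: assumes "orel n (X, w) (Y, u)"
  obtains g h v where "g \<in> carrier_mat n n" "h \<in> carrier_mat n n" "g * h = 1\<^sub>m n" "h * g = 1\<^sub>m n" "v \<in> carrier_vec n"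
  "Y = g * X * h" "u = - (Y *\<^sub>v v) + g *\<^sub>v w"
  using assms unfolding orel_def by auto

lemma orel_refl: assumes "X \<in> carrier_mat n n" "w \<in> carrier_vec n" shows "orel n (X, w) (X, w)"
proof (rule orelI[of "1\<^sub>m n" n "1\<^sub>m n" "0\<^sub>v n"])
  show "X = 1\<^sub>m n * X * 1\<^sub>m n" using assms by simp
  show "w = - (X *\<^sub>v 0\<^sub>v n) + 1\<^sub>m n *\<^sub>v w" using assms by (intro eq_vecI) auto
qed auto

lemma orel_incar: assumes "orel n (X, w) (Y, u)" "X \<in> carrier_mat n n" "w \<in> carrier_vec n"
  shows "Y \<in> carrier_mat n n" "u \<in> carrier_vec n"
proof -
  from assms(1) obtain g h v where g: "g \<in> carrier_mat n n" and h: "h \<in> carrier_mat n n"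
    and v: "v \<in> carrier_vec n" and Y: "Y = g * X * h" and u: "u = - (Y *\<^sub>v v) + g *\<^sub>v w"
    by (rule orelE)
  show Yc: "Y \<in> carrier_mat n n" using Y g h assms(2) by auto
  have "Y *\<^sub>v v \<in> carrier_vec n" "g *\<^sub>v w \<in> carrier_vec n" using Yc g v assms(3) by auto
  thus "u \<in> carrier_vec n" unfolding u by auto
qed

lemma orel_sym: assumes r: "orel n (X, w) (Y, u)" and X: "X \<in> carrier_mat n n" and w: "w \<in> carrier_vec n"
  shows "orel n (Y, u) (X, w)"
proof -
  from r obtain g h v where g: "g \<in> carrier_mat n n" and h: "h \<in> carrier_mat n n" and gh: "g * h = 1\<^sub>m n"
    and hg: "h * g = 1\<^sub>m n" and v: "v \<in> carrier_vec n" and Y: "Y = g * X * h" and u: "u = - (Y *\<^sub>v v) + g *\<^sub>v w"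
    by (rule orelE)
  have Yc: "Y \<in> carrier_mat n n" using Y g h X by auto
  have XY: "X = h * Y * g"
  proof -
    have "h * Y * g = (h * g) * X * (h * g)" using Y g h X by (simp add: assoc_mult_mat[of _ n n _ n _ n])
    thus ?thesis using hg X by simp
  qed
  have hv: "h *\<^sub>v v \<in> carrier_vec n" using h v by simp
  have a1: "h *\<^sub>v (Y *\<^sub>v v) = X *\<^sub>v (h *\<^sub>v v)"
  proof -
    have "h *\<^sub>v (Y *\<^sub>v v) = (h * Y) *\<^sub>v v" using h Yc v by simp
    also have "h * Y = (h * g) * X * h" using Y h g X by (simp add: assoc_mult_mat[of _ n n _ n _ n])
    also have "\<dots> = X * h" using hg X by simp
    also have "(X * h) *\<^sub>v v = X *\<^sub>v (h *\<^sub>v v)" using X h v by simp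
    finally show ?thesis .
  qed
  have a2: "h *\<^sub>v (g *\<^sub>v w) = w"
  proof -
    have "h *\<^sub>v (g *\<^sub>v w) = (h * g) *\<^sub>v w" using h g w by simp
    thus ?thesis using hg w by simp
  qed
  have hu: "h *\<^sub>v u = - (X *\<^sub>v (h *\<^sub>v v)) + w"
    unfolding u using h g Yc v w a1 a2
    by (simp add: mult_add_distrib_mat_vec[of h n n] mult_mat_vec_uminus[of h n n])
  show ?thesis
  proof (rule orelI[OF h g hg gh _ XY])
    show "- (h *\<^sub>v v) \<in> carrier_vec n" using hv by simp
    show "w = - (X *\<^sub>v - (h *\<^sub>v v)) + h *\<^sub>v u"
      unfolding hu using X hv w by (intro eq_vecI) (auto simp: mult_mat_vec_uminus[of X n n])
  qed
qed

lemma orel_trans: assumes r1: "orel n (X, w) (Y, u)" and r2: "orel n (Y, u) (Z, z)"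
  and X: "X \<in> carrier_mat n n" and w: "w \<in> carrier_vec n"
  shows "orel n (X, w) (Z, z)"
proof -
  from r1 obtain g h v where g: "g \<in> carrier_mat n n" and h: "h \<in> carrier_mat n n" and gh: "g * h = 1\<^sub>m n"
    and hg: "h * g = 1\<^sub>m n" and v: "v \<in> carrier_vec n" and Y: "Y = g * X * h" and u: "u = - (Y *\<^sub>v v) + g *\<^sub>v w"
    by (rule orelE)
  from r2 obtain g' h' v' where g': "g' \<in> carrier_mat n n" and h': "h' \<in> carrier_mat n n" and gh': "g' * h' = 1\<^sub>m n"
    and hg': "h' * g' = 1\<^sub>m n" and v': "v' \<in> carrier_vec n" and Z: "Z = g' * Y * h'" and z: "z = - (Z *\<^sub>v v') + g' *\<^sub>v u"
    by (rule orelE)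
  have Yc: "Y \<in> carrier_mat n n" using Y g h X by auto
  have Zc: "Z \<in> carrier_mat n n" using Z g' h' Yc by auto
  have Z2: "Z = (g' * g) * X * (h * h')" using Z Y g h g' h' X by (simp add: assoc_mult_mat[of _ n n _ n _ n])
  have c1: "(g' * g) * (h * h') = 1\<^sub>m n"
  proof -
    have "(g' * g) * (h * h') = g' * (g * h) * h'" using g h g' h' by (simp add: assoc_mult_mat[of _ n n _ n _ n])
    thus ?thesis using gh gh' g' by simp
  qed
  have c2: "(h * h') * (g' * g) = 1\<^sub>m n"
  proof -
    have "(h * h') * (g' * g) = h * (h' * g') * g" using g h g' h' by (simp add: assoc_mult_mat[of _ n n _ n _ n])
    thus ?thesis using hg hg' h by simp
  qed
  have a1: "g' *\<^sub>v (Y *\<^sub>v v) = Z *\<^sub>v (g' *\<^sub>v v)"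
  proof -
    have "Z *\<^sub>v (g' *\<^sub>v v) = (Z * g') *\<^sub>v v" using Zc g' v by simp
    also have "Z * g' = g' * Y * (h' * g')" using Z g' h' Yc by (simp add: assoc_mult_mat[of _ n n _ n _ n])
    also have "\<dots> = g' * Y" using hg' g' Yc by simp
    also have "(g' * Y) *\<^sub>v v = g' *\<^sub>v (Y *\<^sub>v v)" using g' Yc v by simp
    finally show ?thesis by simp
  qed
  have a2: "g' *\<^sub>v (g *\<^sub>v w) = (g' * g) *\<^sub>v w" using g g' w by simp
  have gv: "g' *\<^sub>v v \<in> carrier_vec n" using g' v by simp
  have gu: "g' *\<^sub>v u = - (Z *\<^sub>v (g' *\<^sub>v v)) + (g' * g) *\<^sub>v w"
    unfolding u using g' g Yc v w a1 a2
    by (simp add: mult_add_distrib_mat_vec[of g' n n] mult_mat_vec_uminus[of g' n n])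
  show ?thesis
  proof (rule orelI[OF _ _ c1 c2 add_carrier_vec[OF v' gv] Z2])
    show "z = - (Z *\<^sub>v (v' + g' *\<^sub>v v)) + g' * g *\<^sub>v w"
      unfolding z gu using Zc v' gv g g' w
      by (intro eq_vecI) (auto simp: mult_add_distrib_mat_vec[of Z n n])
  qed (use g g' h h' in auto)
qed

lemma orbit_eq: assumes "orel n (X, w) (Y, u)" "X \<in> carrier_mat n n" "w \<in> carrier_vec n"
  shows "enh_orbit n (X, w) = enh_orbit n (Y, u)"
proof -
  have Y: "Y \<in> carrier_mat n n" "u \<in> carrier_vec n" using orel_incar[OF assms] by auto
  have s: "orel n (Y, u) (X, w)" by (rule orel_sym[OF assms])
  show ?thesis unfolding enh_orbit_orel
  proof (intro Collect_cong iffI)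
    fix yu assume "orel n (X, w) yu"
    then show "orel n (Y, u) yu" using orel_trans[OF s _ Y] by (cases yu) auto
  next
    fix yu assume "orel n (Y, u) yu"
    then show "orel n (X, w) yu" using orel_trans[OF assms(1) _ assms(2,3)] by (cases yu) auto
  qed
qed

definition jpow :: "nat list \<Rightarrow> nat \<Rightarrow> nat \<Rightarrow> nat option" where
  "jpow lam k q = (case dec lam q of (i, s) \<Rightarrow> if k \<le> s then Some (pos lam i (s - k)) else None)"

lemma jpow_pos: "i < length lam \<Longrightarrow> s < lam ! i \<Longrightarrow> jpow lam k (pos lam i s) = (if k \<le> s then Some (pos lam i (s - k)) else None)"
  by (simp add: jpow_def dec_pos)

lemma pclosed_jsh: "pclosed (sum_list lam) (jsh lam)"
  unfolding pclosed_def
proof (intro allI impI)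
  fix q p assume q: "q < sum_list lam" and e: "jsh lam q = Some p"
  from decE[OF q] obtain i s where ii: "i < length lam" "s < lam ! i" "q = pos lam i s" by metis
  from ii e show "p < sum_list lam" by (auto simp: jsh_pos split: if_splits intro!: pos_lt)
qed

lemma pclosed_jpow: "pclosed (sum_list lam) (jpow lam k)"
  unfolding pclosed_def
proof (intro allI impI)
  fix q p assume q: "q < sum_list lam" and e: "jpow lam k q = Some p"
  from decE[OF q] obtain i s where ii: "i < length lam" "s < lam ! i" "q = pos lam i s" by metis
  from ii e show "p < sum_list lam" by (auto simp: jpow_pos split: if_splits intro!: pos_lt)
qed

lemma J_part_dims[simp]: "dim_row (J_part lam) = sum_list lam" "dim_col (J_part lam) = sum_list lam"
  using J_part_dim[of lam] by auto

lemma J_pow: "(J_part lam :: 'a::field mat) ^\<^sub>m k = pmat (sum_list lam) (jpow lam k)"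
proof (induction k)
  case 0
  have "(J_part lam :: 'a mat) ^\<^sub>m 0 = 1\<^sub>m (sum_list lam)" using J_part_dim[of lam] by simp
  also have "\<dots> = pmat (sum_list lam) Some" by (simp add: pmat_Some)
  also have "\<dots> = pmat (sum_list lam) (jpow lam 0)"
  proof (rule pmat_cong)
    fix q assume "q < sum_list lam"
    from decE[OF this] obtain i s where ii: "i < length lam" "s < lam ! i" "q = pos lam i s" by metis
    thus "Some q = jpow lam 0 q" by (simp add: jpow_pos)
  qed
  finally show ?case .
next
  case (Suc k)
  have "(J_part lam :: 'a mat) ^\<^sub>m Suc k = pmat (sum_list lam) (jpow lam k) * pmat (sum_list lam) (jsh lam)"
    using Suc by (simp add: J_part_pmat[symmetric])
  also have "\<dots> = pmat (sum_list lam) (pcomp (jpow lam k) (jsh lam))" by (rule pmat_mult[OF pclosed_jsh])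
  also have "\<dots> = pmat (sum_list lam) (jpow lam (Suc k))"
  proof (rule pmat_cong)
    fix q assume "q < sum_list lam"
    from decE[OF this] obtain i s where ii: "i < length lam" "s < lam ! i" "q = pos lam i s" by metis
    show "pcomp (jpow lam k) (jsh lam) q = jpow lam (Suc k) q"
      using ii by (auto simp: pcomp_def jsh_pos jpow_pos)
  qed
  finally show ?case .
qed

lemma pmat_unit_vec: assumes "pclosed n f" "q < n"
  shows "(pmat n f *\<^sub>v unit_vec n q :: 'a::field vec) = (case f q of Some p \<Rightarrow> unit_vec n p | None \<Rightarrow> 0\<^sub>v n)"
proof (rule eq_vecI)
  fix p assume "p < dim_vec (case f q of Some p \<Rightarrow> unit_vec n p | None \<Rightarrow> (0\<^sub>v n :: 'a vec))"
  hence p: "p < n" by (cases "f q") auto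
  have "(pmat n f *\<^sub>v unit_vec n q :: 'a vec) $ p = (\<Sum>r\<in>{0..<n}. if f r = Some p then unit_vec n q $ r else 0)"
    by (rule pmat_mult_vec[OF p]) simp
  also have "\<dots> = (\<Sum>r\<in>{0..<n}. if r = q then (if f q = Some p then 1 else 0) else (0::'a))"
    by (rule sum.cong) (auto simp: assms)
  also have "\<dots> = (if f q = Some p then 1 else 0)" using assms by simp
  also have "\<dots> = (case f q of Some p \<Rightarrow> unit_vec n p | None \<Rightarrow> (0\<^sub>v n :: 'a vec)) $ p"
    using assms p by (cases "f q") (auto simp: pclosed_def)
  finally show "(pmat n f *\<^sub>v unit_vec n q :: 'a vec) $ p = (case f q of Some p \<Rightarrow> unit_vec n p | None \<Rightarrow> (0\<^sub>v n :: 'a vec)) $ p" .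
qed (cases "f q", auto)

definition gen :: "nat list \<Rightarrow> nat \<Rightarrow> nat" where
  "gen lam i = pos lam i (lam ! i - 1)"

lemma jordan_gen_eq: "i < length lam \<Longrightarrow> 0 < lam ! i \<Longrightarrow> jordan_gen n lam i = unit_vec n (gen lam i)"
  by (simp add: jordan_gen_def gen_def pos_def take_Suc_conv_app_nth)

definition beta :: "nat list \<Rightarrow> nat \<Rightarrow> nat" where
  "beta lam q = (if q < length lam then lam ! q else 0)"

definition invset :: "nat \<Rightarrow> 'a::field mat \<Rightarrow> 'a vec \<Rightarrow> nat set" where
  "invset n X w = {k. \<exists>y \<in> carrier_vec n. X ^\<^sub>m k *\<^sub>v w = X ^\<^sub>m (Suc k) *\<^sub>v y}"

lemma pow_conj: assumes g: "(g :: 'a :: field mat) \<in> carrier_mat n n" and h: "h \<in> carrier_mat n n" and X: "X \<in> carrier_mat n n"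
  and gh: "g * h = 1\<^sub>m n" and hg: "h * g = 1\<^sub>m n"
  shows "(g * X * h) ^\<^sub>m m = g * X ^\<^sub>m m * h"
proof (induction m)
  case 0
  have dX: "dim_row X = n" using X by simp
  thus ?case using g h gh by simp
next
  case (Suc m)
  have Xm: "X ^\<^sub>m m \<in> carrier_mat n n" using X by simp
  have "(g * X * h) ^\<^sub>m Suc m = g * X ^\<^sub>m m * h * (g * X * h)" using Suc by simp
  also have "\<dots> = g * (X ^\<^sub>m m * X) * h" using g h X Xm hg by (simp add: sq_assoc[of _ n] inv_cancel[OF hg h g, where nc=n])
  finally show ?case by simp
qed

lemma invset_orel: assumes r: "orel n (X, w) (Y, u)" and X: "(X :: 'a :: field mat) \<in> carrier_mat n n" and w: "w \<in> carrier_vec n"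
  and k: "k \<in> invset n X w" shows "k \<in> invset n Y u"
proof -
  from r obtain g h v where g: "g \<in> carrier_mat n n" and h: "h \<in> carrier_mat n n" and gh: "g * h = 1\<^sub>m n"
    and hg: "h * g = 1\<^sub>m n" and v: "v \<in> carrier_vec n" and Y: "Y = g * X * h" and u: "u = - (Y *\<^sub>v v) + g *\<^sub>v w"
    by (rule orelE)
  from k obtain y where y: "y \<in> carrier_vec n" and ky: "X ^\<^sub>m k *\<^sub>v w = X ^\<^sub>m (Suc k) *\<^sub>v y"
    unfolding invset_def by auto
  have Yc: "Y \<in> carrier_mat n n" using Y g h X by auto
  have Yk: "Y ^\<^sub>m m = g * X ^\<^sub>m m * h" for m unfolding Y by (rule pow_conj[OF g h X gh hg])
  have Ykc: "Y ^\<^sub>m m \<in> carrier_mat n n" for m using Yc by simp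
  have Xkc: "X ^\<^sub>m m \<in> carrier_mat n n" for m using X by simp
  have e1: "Y ^\<^sub>m k *\<^sub>v (Y *\<^sub>v v) = Y ^\<^sub>m (Suc k) *\<^sub>v v" using assoc_mult_mat_vec[OF Ykc[of k] Yc v] by simp
  have e2: "Y ^\<^sub>m k *\<^sub>v (g *\<^sub>v w) = g *\<^sub>v (X ^\<^sub>m k *\<^sub>v w)"
  proof -
    show ?thesis unfolding Yk using g h Xkc w by (simp add: sq_assoc[of _ n] sq_assoc_vec[of _ n] inv_cancel_vec[OF hg h g])
  qed
  have e3: "g *\<^sub>v (X ^\<^sub>m (Suc k) *\<^sub>v y) = Y ^\<^sub>m (Suc k) *\<^sub>v (g *\<^sub>v y)"
  proof -
    show ?thesis unfolding Yk using g h Xkc y by (simp add: sq_assoc[of _ n] sq_assoc_vec[of _ n] inv_cancel_vec[OF hg h g] del: pow_mat.simps)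
  qed
  have gy: "g *\<^sub>v y \<in> carrier_vec n" using g y by simp
  have "Y ^\<^sub>m k *\<^sub>v u = - (Y ^\<^sub>m (Suc k) *\<^sub>v v) + Y ^\<^sub>m (Suc k) *\<^sub>v (g *\<^sub>v y)"
    unfolding u using Ykc[of k] Yc v g w e1 e2 e3 ky
    by (simp add: mult_add_distrib_mat_vec[of _ n n] mult_mat_vec_uminus[of _ n n])
  also have "\<dots> = Y ^\<^sub>m (Suc k) *\<^sub>v (- v + g *\<^sub>v y)"
    using Ykc[of "Suc k"] v gy by (simp add: mult_add_distrib_mat_vec[of _ n n] mult_mat_vec_uminus[of _ n n])
  finally show ?thesis unfolding invset_def using v gy by auto
qed

lemma invset_eq: assumes r: "orel n (X, w) (Y, u)" and X: "X \<in> carrier_mat n n" and w: "w \<in> carrier_vec n"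
  shows "invset n X w = invset n Y u"
  using invset_orel[OF r X w] invset_orel[OF orel_sym[OF r X w] orel_incar[OF r X w]] by blast

lemma invset_J: assumes "\<forall>a \<in> set lam. 0 < a" "n = sum_list lam"
  shows "invset n (J_part lam :: 'a::field mat) (u_vec n lam q) = {k. beta lam q \<le> k}"
proof (cases "q < length lam")
  case False
  hence "u_vec n lam q = (0\<^sub>v n :: 'a vec)" "beta lam q = 0" by (auto simp: u_vec_def beta_def)
  moreover have z: "(J_part lam :: 'a mat) ^\<^sub>m m *\<^sub>v 0\<^sub>v n = 0\<^sub>v n" for m
    by (rule mult_mat_vec_zero, rule sq_pow) (use J_part_dim[of lam] assms(2) in simp)
  hence "(J_part lam :: 'a mat) ^\<^sub>m k *\<^sub>v 0\<^sub>v n = J_part lam ^\<^sub>m Suc k *\<^sub>v 0\<^sub>v n" for k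
    by (simp only: z)
  ultimately show ?thesis unfolding invset_def by auto
next
  case True
  let ?b = "lam ! q"
  have b: "0 < ?b" using True assms(1) by auto
  have u: "u_vec n lam q = (unit_vec n (gen lam q) :: 'a vec)" using True b by (simp add: u_vec_def jordan_gen_eq)
  have gq: "gen lam q < n" unfolding gen_def assms(2) using True b by (intro pos_lt) auto
  have z: "(J_part lam :: 'a mat) ^\<^sub>m m *\<^sub>v 0\<^sub>v n = 0\<^sub>v n" for m
    by (rule mult_mat_vec_zero, rule sq_pow) (use J_part_dim[of lam] assms(2) in simp)
  have Jk: "(J_part lam :: 'a mat) ^\<^sub>m k = pmat n (jpow lam k)" for k using assms(2) by (simp add: J_pow)
  have Jgen: "(J_part lam :: 'a mat) ^\<^sub>m k *\<^sub>v u_vec n lam q =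
     (if k \<le> ?b - 1 then unit_vec n (pos lam q (?b - 1 - k)) else 0\<^sub>v n)" for k
  proof -
    have "pmat n (jpow lam k) *\<^sub>v unit_vec n (gen lam q) = (case jpow lam k (gen lam q) of Some p \<Rightarrow> unit_vec n p | None \<Rightarrow> (0\<^sub>v n :: 'a vec))"
      by (rule pmat_unit_vec[OF _ gq]) (use pclosed_jpow[of lam k] assms(2) in simp)
    moreover have "jpow lam k (gen lam q) = (if k \<le> ?b - 1 then Some (pos lam q (?b - 1 - k)) else None)"
      unfolding gen_def using True b by (simp add: jpow_pos)
    ultimately show ?thesis unfolding Jk u by simp
  qed
  have bq: "beta lam q = ?b" using True by (simp add: beta_def)
  show ?thesis unfolding bq
  proof (intro equalityI subsetI)
    fix k assume "k \<in> invset n (J_part lam :: 'a mat) (u_vec n lam q)"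
    then obtain y where y: "y \<in> carrier_vec n" and e: "(J_part lam :: 'a mat) ^\<^sub>m k *\<^sub>v u_vec n lam q = J_part lam ^\<^sub>m Suc k *\<^sub>v y"
      unfolding invset_def by auto
    show "k \<in> {k. ?b \<le> k}"
    proof (rule ccontr)
      assume "k \<notin> {k. ?b \<le> k}"
      hence kb: "k \<le> ?b - 1" by auto
      let ?p = "pos lam q (?b - 1 - k)"
      have p: "?p < n" unfolding assms(2) using True b by (intro pos_lt) auto
      have "((J_part lam :: 'a mat) ^\<^sub>m k *\<^sub>v u_vec n lam q) $ ?p = 1" unfolding Jgen using kb p by simp
      moreover have "((J_part lam :: 'a mat) ^\<^sub>m Suc k *\<^sub>v y) $ ?p = 0"
        unfolding Jk
      proof (rule pmat_mult_vec_none[OF p y])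
        fix r assume r: "r < n"
        from decE[OF r[unfolded assms(2)]] obtain i s where ii: "i < length lam" "s < lam ! i" "r = pos lam i s" by metis
        show "jpow lam (Suc k) r \<noteq> Some ?p"
        proof
          assume "jpow lam (Suc k) r = Some ?p"
          hence "Suc k \<le> s" "pos lam i (s - Suc k) = ?p" using ii by (auto simp: jpow_pos split: if_splits)
          hence sk: "Suc k \<le> s" and eq: "pos lam i (s - Suc k) = ?p" by auto
          have l1: "s - Suc k < lam ! i" using ii by simp
          have l2: "?b - 1 - k < lam ! q" using b by simp
          from pos_eq_iff[OF ii(1) l1 True l2] eq have "i = q \<and> s - Suc k = ?b - 1 - k" by simp
          thus False using ii sk kb by auto
        qed
      qed
      ultimately show False using e by simp
    qed
  next
    fix k assume "k \<in> {k. ?b \<le> k}"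
    hence "\<not> k \<le> ?b - 1" using b by auto
    hence "(J_part lam :: 'a mat) ^\<^sub>m k *\<^sub>v u_vec n lam q = J_part lam ^\<^sub>m Suc k *\<^sub>v 0\<^sub>v n"
      unfolding Jgen z by simp
    thus "k \<in> invset n (J_part lam :: 'a mat) (u_vec n lam q)" unfolding invset_def by auto
  qed
qed

lemma orel_similar: assumes "orel n (X, w) (Y, u)" "(X :: 'a :: field mat) \<in> carrier_mat n n"
  shows "similar_mat Y X"
proof -
  from assms(1) obtain g h v where g: "g \<in> carrier_mat n n" and h: "h \<in> carrier_mat n n" and gh: "g * h = 1\<^sub>m n"
    and hg: "h * g = 1\<^sub>m n" and Y: "Y = g * X * h"
    by (rule orelE)
  have Yc: "Y \<in> carrier_mat n n" using Y g h assms(2) by simp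
  hence d: "dim_row Y = n" by simp
  have "similar_mat_wit Y X g h" unfolding similar_mat_wit_def Let_def d using Yc assms(2) g h gh hg Y by auto
  thus ?thesis unfolding similar_mat_def by blast
qed

lemma jnf_J: assumes "\<forall>a\<in>set lam. 0 < a"
  shows "jordan_nf (J_part lam :: 'a :: field mat) (map (\<lambda>a. (a, 0)) lam)"
  unfolding jordan_nf_def
proof
  show "0 \<notin> fst ` set (map (\<lambda>a. (a, 0::'a)) lam)" using assms by auto
  show "similar_mat (J_part lam :: 'a mat) (jordan_matrix (map (\<lambda>a. (a, 0)) lam))"
    unfolding J_part_def[symmetric] by (rule similar_mat_refl[OF J_part_dim])
qed

lemma count_map0: "length (filter ((=) (k, 0 :: 'a :: zero)) (map (\<lambda>a. (a, 0)) xs)) = count_list xs k"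
  by (induction xs) auto

lemma part_unique: assumes l: "is_partition n lam" and m: "is_partition n mu"
  and sim: "similar_mat (J_part lam :: 'a :: field mat) (J_part mu)"
  shows "lam = mu"
proof -
  have pl: "\<forall>a\<in>set lam. 0 < a" and pm: "\<forall>a\<in>set mu. 0 < a" using l m by (auto simp: is_partition_def)
  have j1: "jordan_nf (J_part lam :: 'a mat) (map (\<lambda>a. (a, 0)) lam)" by (rule jnf_J[OF pl])
  have j2: "jordan_nf (J_part lam :: 'a mat) (map (\<lambda>a. (a, 0)) mu)"
    using sim unfolding jordan_nf_def J_part_def[symmetric] using pm by auto
  have c: "count_list lam k = count_list mu k" for k
  proof (cases "k = 0")
    case True thus ?thesis using pl pm by (auto intro!: count_notin[THEN trans] simp: count_list_0_iff)
  next
    case False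
    from compute_nr_of_jordan_blocks[OF j1 False, of 0] compute_nr_of_jordan_blocks[OF j2 False, of 0]
    show ?thesis unfolding count_map0 by simp
  qed
  have ms: "mset (rev lam) = mset (rev mu)" by (rule multiset_eqI) (simp add: count_mset c)
  have s1: "sorted (rev lam)" and s2: "sorted (rev mu)" using l m by (auto simp: is_partition_def sorted_wrt_rev)
  have "sort (rev mu) = rev lam" by (rule properties_for_sort[OF ms s1])
  moreover have "sort (rev mu) = rev mu" by (rule sorted_sort_id[OF s2])
  ultimately show ?thesis by simp
qed

lemma filter_gt_index: assumes "sorted_wrt (\<ge>) lam" "b \<in> set lam"
  shows "length (filter (\<lambda>a. b < a) lam) < length lam \<and> lam ! length (filter (\<lambda>a. b < a) lam) = (b :: nat)"
  using assms
proof (induction lam)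
  case Nil thus ?case by simp
next
  case (Cons a rest)
  show ?case
  proof (cases "b = a")
    case True
    have "filter (\<lambda>x. b < x) rest = []" using Cons.prems True by (auto simp: filter_empty_conv)
    thus ?thesis using True by simp
  next
    case False
    hence br: "b \<in> set rest" "b < a" using Cons.prems by auto
    from Cons.IH[OF _ br(1)] Cons.prems have "length (filter (\<lambda>x. b < x) rest) < length rest \<and> rest ! length (filter (\<lambda>x. b < x) rest) = b"
      by auto
    thus ?thesis using br by simp
  qed
qed

lemma enh_q_char: assumes l: "is_partition n lam" and q: "q \<in> enh_q lam" and ql: "q < length lam"
  shows "0 < lam ! q \<and> q = length (filter (\<lambda>a. lam ! q < a) lam)"
proof -
  from q ql obtain b where b: "b \<in> set lam" and qb: "q = length (filter (\<lambda>a. b < a) lam)"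
    unfolding enh_q_def by auto
  have s: "sorted_wrt (\<ge>) lam" using l by (simp add: is_partition_def)
  from filter_gt_index[OF s b] qb have "lam ! q = b" by simp
  moreover have "0 < b" using l b by (auto simp: is_partition_def)
  ultimately show ?thesis using qb by simp
qed

lemma enh_q_le: "q \<in> enh_q lam \<Longrightarrow> q \<le> length lam"
  unfolding enh_q_def by (auto intro: length_filter_le)

lemma beta_inj: assumes l: "is_partition n lam" and q: "q \<in> enh_q lam" and p: "p \<in> enh_q lam"
  and e: "beta lam q = beta lam p" shows "q = p"
proof (cases "q < length lam"; cases "p < length lam")
  assume a: "q < length lam" "p < length lam"
  with e have "lam ! q = lam ! p" by (simp add: beta_def)
  thus ?thesis using enh_q_char[OF l q a(1)] enh_q_char[OF l p a(2)] by metis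
next
  assume a: "q < length lam" "\<not> p < length lam"
  thus ?thesis using e enh_q_char[OF l q a(1)] by (simp add: beta_def)
next
  assume a: "\<not> q < length lam" "p < length lam"
  thus ?thesis using e enh_q_char[OF l p a(2)] by (simp add: beta_def)
next
  assume a: "\<not> q < length lam" "\<not> p < length lam"
  thus ?thesis using enh_q_le[OF q] enh_q_le[OF p] by simp
qed

lemma J_nilpotent: "(J_part lam :: 'a :: field mat) ^\<^sub>m (sum_list lam) = 0\<^sub>m (sum_list lam) (sum_list lam)"
proof -
  have "(J_part lam :: 'a mat) ^\<^sub>m (sum_list lam) = pmat (sum_list lam) (jpow lam (sum_list lam))" by (rule J_pow)
  also have "\<dots> = pmat (sum_list lam) (\<lambda>_. None)"
  proof (rule pmat_cong)
    fix q assume "q < sum_list lam"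
    from decE[OF this] obtain i s where ii: "i < length lam" "s < lam ! i" "q = pos lam i s" by metis
    have "lam ! i \<le> sum_list lam" using ii(1) by (intro member_le_sum_list) auto
    thus "jpow lam (sum_list lam) q = None" using ii by (simp add: jpow_pos)
  qed
  finally show ?thesis by (simp add: pmat_None)
qed

lemma u_vec_carrier: "u_vec n lam q \<in> carrier_vec n"
  by (simp add: u_vec_def jordan_gen_def)

lemma EP_nilcone: assumes "(lam, q) \<in> enhanced_partitions n"
  shows "(J_part lam, u_vec n lam q) \<in> (enh_nilcone n :: ('a :: field mat \<times> 'a vec) set)"
proof -
  have n: "n = sum_list lam" using assms by (simp add: enhanced_partitions_def is_partition_def)
  show ?thesis unfolding enh_nilcone_def using J_part_dim[of lam] J_nilpotent[of lam] u_vec_carrier[of n lam q] n by auto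
qed

lemma smult_mat_vec: "T \<in> carrier_mat n n \<Longrightarrow> w \<in> carrier_vec n \<Longrightarrow> (c \<cdot>\<^sub>m T) *\<^sub>v w = c \<cdot>\<^sub>v (T *\<^sub>v (w :: 'a::field vec))"
  by (intro eq_vecI) auto

lemma shear_mult: assumes T: "(T :: 'a::field mat) \<in> carrier_mat n n" and TT: "T * T = e \<cdot>\<^sub>m T"
  and cd: "c + d + c * d * e = 0"
  shows "(1\<^sub>m n + c \<cdot>\<^sub>m T) * (1\<^sub>m n + d \<cdot>\<^sub>m T) = 1\<^sub>m n"
proof -
  have I: "1\<^sub>m n \<in> carrier_mat n n" by simp
  have cT: "c \<cdot>\<^sub>m T \<in> carrier_mat n n" and dT: "d \<cdot>\<^sub>m T \<in> carrier_mat n n" using T by auto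
  have h: "1\<^sub>m n + d \<cdot>\<^sub>m T \<in> carrier_mat n n" using dT by simp
  have "(1\<^sub>m n + c \<cdot>\<^sub>m T) * (1\<^sub>m n + d \<cdot>\<^sub>m T) = 1\<^sub>m n * (1\<^sub>m n + d \<cdot>\<^sub>m T) + (c \<cdot>\<^sub>m T) * (1\<^sub>m n + d \<cdot>\<^sub>m T)"
    by (rule add_mult_distrib_mat[OF I cT h])
  also have "1\<^sub>m n * (1\<^sub>m n + d \<cdot>\<^sub>m T) = 1\<^sub>m n + d \<cdot>\<^sub>m T" by (rule left_mult_one_mat[OF h])
  also have "(c \<cdot>\<^sub>m T) * (1\<^sub>m n + d \<cdot>\<^sub>m T) = c \<cdot>\<^sub>m (T * (1\<^sub>m n + d \<cdot>\<^sub>m T))" by (rule mult_smult_assoc_mat[OF T h])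
  also have "T * (1\<^sub>m n + d \<cdot>\<^sub>m T) = T * 1\<^sub>m n + T * (d \<cdot>\<^sub>m T)" by (rule mult_add_distrib_mat[OF T I dT])
  also have "T * 1\<^sub>m n = T" by (rule right_mult_one_mat[OF T])
  also have "T * (d \<cdot>\<^sub>m T) = d \<cdot>\<^sub>m (T * T)" by (rule mult_smult_distrib[OF T T])
  also have "1\<^sub>m n + d \<cdot>\<^sub>m T + c \<cdot>\<^sub>m (T + d \<cdot>\<^sub>m (T * T)) = 1\<^sub>m n"
  proof (rule eq_matI)
    fix i j assume "i < dim_row (1\<^sub>m n :: 'a mat)" "j < dim_col (1\<^sub>m n :: 'a mat)"
    hence ij: "i < n" "j < n" by auto
    have "c * (T $$ (i, j) + d * (e * T $$ (i, j))) + d * T $$ (i, j) = (c + d + c * d * e) * T $$ (i,j)"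
      by (simp add: algebra_simps)
    thus "(1\<^sub>m n + d \<cdot>\<^sub>m T + c \<cdot>\<^sub>m (T + d \<cdot>\<^sub>m (T * T))) $$ (i, j) = (1\<^sub>m n :: 'a mat) $$ (i, j)"
      using ij T unfolding TT cd by (simp add: algebra_simps)
  qed (use T in auto)
  finally show ?thesis .
qed

lemma shear_orel: assumes J: "(J :: 'a::field mat) \<in> carrier_mat n n" and T: "T \<in> carrier_mat n n"
  and TJ: "T * J = J * T" and TT: "T * T = e \<cdot>\<^sub>m T" and ce: "1 + c * e \<noteq> 0" and w: "w \<in> carrier_vec n"
  shows "orel n (J, w) (J, w + c \<cdot>\<^sub>v (T *\<^sub>v w))"
proof -
  define d where "d = - c / (1 + c * e)"
  have cd: "c + d + c * d * e = 0" "d + c + d * c * e = 0" using ce unfolding d_def by (auto simp: field_simps)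
  define g where "g = 1\<^sub>m n + c \<cdot>\<^sub>m T"
  define h where "h = 1\<^sub>m n + d \<cdot>\<^sub>m T"
  have I: "1\<^sub>m n \<in> carrier_mat n n" by simp
  have cT: "c \<cdot>\<^sub>m T \<in> carrier_mat n n" using T by auto
  have g: "g \<in> carrier_mat n n" and h: "h \<in> carrier_mat n n" using T unfolding g_def h_def by auto
  have gh: "g * h = 1\<^sub>m n" unfolding g_def h_def by (rule shear_mult[OF T TT cd(1)])
  have hg: "h * g = 1\<^sub>m n" unfolding g_def h_def by (rule shear_mult[OF T TT cd(2)])
  have gJ: "g * J = J * g"
  proof -
    have "g * J = 1\<^sub>m n * J + (c \<cdot>\<^sub>m T) * J" unfolding g_def by (rule add_mult_distrib_mat[OF I cT J])
    also have "\<dots> = J + c \<cdot>\<^sub>m (T * J)" using J T by (simp add: mult_smult_assoc_mat[OF T J])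
    also have "\<dots> = J * 1\<^sub>m n + J * (c \<cdot>\<^sub>m T)" using J T by (simp add: mult_smult_distrib[OF J T] TJ)
    also have "\<dots> = J * g" unfolding g_def by (rule mult_add_distrib_mat[OF J I cT, symmetric])
    finally show ?thesis .
  qed
  have gJh: "g * J * h = J"
  proof -
    have "g * J * h = J * g * h" by (simp add: gJ)
    also have "\<dots> = J * (g * h)" by (rule assoc_mult_mat[OF J g h])
    finally show ?thesis using gh J by simp
  qed
  have gw: "g *\<^sub>v w = w + c \<cdot>\<^sub>v (T *\<^sub>v w)"
  proof -
    have "g *\<^sub>v w = 1\<^sub>m n *\<^sub>v w + (c \<cdot>\<^sub>m T) *\<^sub>v w" unfolding g_def by (rule add_mult_distrib_mat_vec[OF I cT w])
    thus ?thesis using w T by (simp add: smult_mat_vec)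
  qed
  show ?thesis
  proof (rule orelI[OF g h gh hg zero_carrier_vec gJh[symmetric]])
    show "w + c \<cdot>\<^sub>v (T *\<^sub>v w) = - (J *\<^sub>v 0\<^sub>v n) + g *\<^sub>v w" unfolding gw using J T w
      by (intro eq_vecI) auto
  qed
qed

definition gv :: "nat list \<Rightarrow> (nat \<Rightarrow> 'a) \<Rightarrow> 'a::field vec" where
  "gv lam c = vec (sum_list lam) (\<lambda>p. case dec lam p of (i, s) \<Rightarrow> if s = lam ! i - 1 then c i else 0)"

lemma gv_carrier[simp]: "gv lam c \<in> carrier_vec (sum_list lam)"
  by (simp add: gv_def)

lemma gv_dim[simp]: "dim_vec (gv lam c) = sum_list lam"
  by (simp add: gv_def)

lemma gv_pos: "i < length lam \<Longrightarrow> s < lam ! i \<Longrightarrow> gv lam c $ pos lam i s = (if s = lam ! i - 1 then c i else 0)"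
  by (simp add: gv_def pos_lt dec_pos)

lemma vec_eq_pos: assumes "v \<in> carrier_vec (sum_list lam)" "v' \<in> carrier_vec (sum_list lam)"
  "\<And>i s. i < length lam \<Longrightarrow> s < lam ! i \<Longrightarrow> v $ pos lam i s = v' $ pos lam i s"
  shows "v = (v' :: 'a vec)"
proof (rule eq_vecI)
  fix p assume "p < dim_vec v'"
  hence "p < sum_list lam" using assms(2) by simp
  from decE[OF this] obtain i s where ii: "i < length lam" "s < lam ! i" "p = pos lam i s" by metis
  thus "v $ p = v' $ p" using assms(3) by simp
qed (use assms in simp)

lemma gv_cong: "(\<And>k. k < length lam \<Longrightarrow> c k = c' k) \<Longrightarrow> gv lam c = gv lam c'"
  by (rule vec_eq_pos[where lam=lam]) (auto simp: gv_pos)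

lemma gv_zero: "gv lam (\<lambda>_. 0) = (0\<^sub>v (sum_list lam) :: 'a::field vec)"
  by (rule vec_eq_pos[where lam=lam]) (auto simp: gv_pos pos_lt)

lemma gv_add_smult: "gv lam c + x \<cdot>\<^sub>v gv lam c' = gv lam (\<lambda>k. c k + x * (c' k :: 'a::field))"
proof (rule vec_eq_pos[where lam=lam])
  fix i s assume ii: "i < length lam" "s < lam ! i"
  have p: "pos lam i s < sum_list lam" by (rule pos_lt[OF ii])
  show "(gv lam c + x \<cdot>\<^sub>v gv lam c') $ pos lam i s = gv lam (\<lambda>k. c k + x * c' k) $ pos lam i s"
    using p ii by (simp add: gv_pos)
qed auto

lemma u_vec_gv: assumes pl: "\<forall>a\<in>set lam. 0 < a" and q: "q < length lam"
  shows "u_vec (sum_list lam) lam q = (gv lam (\<lambda>k. if k = q then 1 else 0) :: 'a::field vec)"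
proof -
  have b: "0 < lam ! q" using pl q by auto
  have u: "u_vec (sum_list lam) lam q = (unit_vec (sum_list lam) (pos lam q (lam ! q - 1)) :: 'a vec)"
    using q b by (simp add: u_vec_def jordan_gen_eq gen_def)
  have gq: "pos lam q (lam ! q - 1) < sum_list lam" using q b by (intro pos_lt) auto
  show ?thesis unfolding u
  proof (rule vec_eq_pos)
    fix i s assume ii: "i < length lam" "s < lam ! i"
    have "pos lam i s = pos lam q (lam ! q - 1) \<longleftrightarrow> i = q \<and> s = lam ! q - 1"
      by (rule pos_eq_iff[OF ii q]) (use b in simp)
    thus "(unit_vec (sum_list lam) (pos lam q (lam ! q - 1)) :: 'a vec) $ pos lam i s = gv lam (\<lambda>k. if k = q then 1 else 0) $ pos lam i s"
      using ii gq pos_lt[OF ii] by (auto simp: gv_pos)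
  qed auto
qed

lemma translate: assumes pl: "\<forall>a\<in>set lam. 0 < a" and w: "w \<in> carrier_vec (sum_list lam)"
  shows "orel (sum_list lam) (J_part lam, w) (J_part lam :: 'a::field mat, gv lam (\<lambda>i. w $ gen lam i))"
proof -
  let ?n = "sum_list lam"
  define v :: "'a vec" where "v = vec ?n (\<lambda>p. case dec lam p of (i, s) \<Rightarrow> if s = 0 then 0 else w $ pos lam (i) (s - 1))"
  have v: "v \<in> carrier_vec ?n" unfolding v_def by simp
  have vpos: "v $ pos lam i s = (if s = 0 then 0 else w $ pos lam i (s - 1))" if "i < length lam" "s < lam ! i" for i s
    using that by (simp add: v_def pos_lt dec_pos)
  have J: "J_part lam \<in> carrier_mat ?n ?n" by (rule J_part_dim)
  show ?thesis
  proof (rule orelI[of "1\<^sub>m ?n" _ "1\<^sub>m ?n" v])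
    show "J_part lam = 1\<^sub>m ?n * J_part lam * 1\<^sub>m ?n" using J by simp
    show "gv lam (\<lambda>i. w $ gen lam i) = - (J_part lam *\<^sub>v v) + 1\<^sub>m ?n *\<^sub>v w"
    proof (rule vec_eq_pos)
      fix i s assume ii: "i < length lam" "s < lam ! i"
      have p: "pos lam i s < ?n" by (rule pos_lt[OF ii])
      show "gv lam (\<lambda>i. w $ gen lam i) $ pos lam i s = (- (J_part lam *\<^sub>v v) + 1\<^sub>m ?n *\<^sub>v w) $ pos lam i s"
      proof (cases "s = lam ! i - 1")
        case True
        have "(J_part lam *\<^sub>v v) $ pos lam i s = 0" unfolding J_part_pmat
        proof (rule pmat_mult_vec_none[OF p v])
          fix r assume r: "r < ?n"
          from decE[OF this] obtain x t where xt: "x < length lam" "t < lam ! x" "r = pos lam x t" by metis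
          show "jsh lam r \<noteq> Some (pos lam i s)"
          proof
            assume "jsh lam r = Some (pos lam i s)"
            hence "t \<noteq> 0" "pos lam x (t - 1) = pos lam i s" using xt by (auto simp: jsh_pos split: if_splits)
            moreover have "t - 1 < lam ! x" using xt by simp
            ultimately have "x = i" "t - 1 = s" using pos_eq_iff[OF xt(1) _ ii] by auto
            thus False using xt True \<open>t \<noteq> 0\<close> by auto
          qed
        qed
        thus ?thesis using True ii p w v J by (simp add: gv_pos gen_def)
      next
        case False
        hence s1: "Suc s < lam ! i" using ii by simp
        have "(J_part lam *\<^sub>v v) $ pos lam i s = v $ pos lam i (Suc s)" unfolding J_part_pmat
        proof (rule pmat_mult_vec_unique[OF p v pos_lt[OF ii(1) s1]])
          show "jsh lam (pos lam i (Suc s)) = Some (pos lam i s)" using ii s1 by (simp add: jsh_pos)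
          fix r assume r: "r < ?n" and e: "jsh lam r = Some (pos lam i s)"
          from decE[OF r] obtain x t where xt: "x < length lam" "t < lam ! x" "r = pos lam x t" by metis
          from e xt have "t \<noteq> 0" "pos lam x (t - 1) = pos lam i s" by (auto simp: jsh_pos split: if_splits)
          moreover have "t - 1 < lam ! x" using xt by simp
          ultimately have "x = i" "t - 1 = s" using pos_eq_iff[OF xt(1) _ ii] by auto
          thus "r = pos lam i (Suc s)" using xt \<open>t \<noteq> 0\<close> by auto
        qed
        also have "\<dots> = w $ pos lam i s" using ii s1 by (simp add: vpos)
        finally show ?thesis using False ii p w v J by (simp add: gv_pos)
      qed
    qed (use J v w sq_mult_vec[OF J v] in \<open>auto intro!: add_carrier_vec\<close>)
  qed (use J v in auto)
qed

definition tmap :: "nat list \<Rightarrow> nat \<Rightarrow> nat \<Rightarrow> nat \<Rightarrow> nat option" where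
  "tmap lam i j r = (case dec lam r of (x, s) \<Rightarrow>
     if x = j \<and> lam ! j - lam ! i \<le> s then Some (pos lam i (s - (lam ! j - lam ! i))) else None)"

lemma tmap_pos: "x < length lam \<Longrightarrow> s < lam ! x \<Longrightarrow> tmap lam i j (pos lam x s) =
  (if x = j \<and> lam ! j - lam ! i \<le> s then Some (pos lam i (s - (lam ! j - lam ! i))) else None)"
  by (simp add: tmap_def dec_pos)

definition prj :: "nat list \<Rightarrow> nat \<Rightarrow> nat \<Rightarrow> nat option" where
  "prj lam i r = (case dec lam r of (x, s) \<Rightarrow> if x = i then Some r else None)"

lemma prj_pos: "x < length lam \<Longrightarrow> s < lam ! x \<Longrightarrow> prj lam i (pos lam x s) = (if x = i then Some (pos lam x s) else None)"
  by (simp add: prj_def dec_pos)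

context
  fixes lam :: "nat list" and i j :: nat
  assumes ij: "i < length lam" "j < length lam" "lam ! i \<le> lam ! j" and ipos: "0 < lam ! i"
begin

lemma tmap_bound: "s < lam ! j \<Longrightarrow> s - (lam ! j - lam ! i) < lam ! i"
  using ij ipos by arith

lemma pclosed_tmap: "pclosed (sum_list lam) (tmap lam i j)"
  unfolding pclosed_def
proof (intro allI impI)
  fix q p assume q: "q < sum_list lam" and e: "tmap lam i j q = Some p"
  from decE[OF q] obtain x s where ii: "x < length lam" "s < lam ! x" "q = pos lam x s" by metis
  from ii e show "p < sum_list lam" using tmap_bound ij by (auto simp: tmap_pos split: if_splits intro!: pos_lt)
qed

lemma tmap_comm: "(pmat (sum_list lam) (tmap lam i j) :: 'a::field mat) * J_part lam = J_part lam * pmat (sum_list lam) (tmap lam i j)"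
  unfolding J_part_pmat pmat_mult[OF pclosed_jsh] pmat_mult[OF pclosed_tmap]
proof (rule pmat_cong)
  fix r assume "r < sum_list lam"
  from decE[OF this] obtain x s where ii: "x < length lam" "s < lam ! x" "r = pos lam x s" by metis
  show "pcomp (tmap lam i j) (jsh lam) r = pcomp (jsh lam) (tmap lam i j) r"
  proof (cases "x = j \<and> lam ! j - lam ! i < s")
    case True
    have b1: "s - 1 < lam ! x" "s - (lam ! j - lam ! i) < lam ! i" using ii True tmap_bound by auto
    show ?thesis using True ii b1 ij by (auto simp: pcomp_def jsh_pos tmap_pos)
  next
    case False
    have b1: "s - 1 < lam ! x" using ii by auto
    show ?thesis using False ii b1 ij tmap_bound
      by (auto simp: pcomp_def jsh_pos tmap_pos split: if_splits)
  qed
qed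

lemma tmap_sq: assumes "i \<noteq> j"
  shows "(pmat (sum_list lam) (tmap lam i j) :: 'a::field mat) * pmat (sum_list lam) (tmap lam i j) = 0 \<cdot>\<^sub>m pmat (sum_list lam) (tmap lam i j)"
proof -
  have "(pmat (sum_list lam) (tmap lam i j) :: 'a mat) * pmat (sum_list lam) (tmap lam i j) = pmat (sum_list lam) (\<lambda>_. None)"
    unfolding pmat_mult[OF pclosed_tmap]
  proof (rule pmat_cong)
    fix r assume "r < sum_list lam"
    from decE[OF this] obtain x s where ii: "x < length lam" "s < lam ! x" "r = pos lam x s" by metis
    show "pcomp (tmap lam i j) (tmap lam i j) r = None"
      using ii assms tmap_bound ij by (auto simp: pcomp_def tmap_pos)
  qed
  also have "\<dots> = 0 \<cdot>\<^sub>m pmat (sum_list lam) (tmap lam i j)" by (rule eq_matI) auto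
  finally show ?thesis .
qed

lemma tmap_gv: assumes pl: "\<forall>a\<in>set lam. 0 < a"
  shows "pmat (sum_list lam) (tmap lam i j) *\<^sub>v gv lam c = (gv lam (\<lambda>k. if k = i then c j else 0) :: 'a::field vec)"
proof (rule vec_eq_pos)
  fix x s assume ii: "x < length lam" "s < lam ! x"
  have p: "pos lam x s < sum_list lam" by (rule pos_lt[OF ii])
  show "(pmat (sum_list lam) (tmap lam i j) *\<^sub>v gv lam c) $ pos lam x s = gv lam (\<lambda>k. if k = i then c j else (0::'a)) $ pos lam x s"
  proof (cases "x = i")
    case True
    let ?d = "lam ! j - lam ! i"
    have "s < lam ! i" using ii True by simp
    hence sd: "s + ?d < lam ! j" using ij(3) by arith
    have "(pmat (sum_list lam) (tmap lam i j) *\<^sub>v gv lam c) $ pos lam x s = gv lam c $ pos lam j (s + ?d)"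
    proof (rule pmat_mult_vec_unique[OF p gv_carrier pos_lt[OF ij(2) sd]])
      show "tmap lam i j (pos lam j (s + ?d)) = Some (pos lam x s)" using sd True ij by (simp add: tmap_pos)
      fix r assume r: "r < sum_list lam" and e: "tmap lam i j r = Some (pos lam x s)"
      from decE[OF r] obtain y t where yt: "y < length lam" "t < lam ! y" "r = pos lam y t" by metis
      from e yt have "y = j" "?d \<le> t" "pos lam i (t - ?d) = pos lam x s" by (auto simp: tmap_pos split: if_splits)
      moreover have "t - ?d < lam ! i" using yt \<open>y = j\<close> tmap_bound by auto
      ultimately have "t - ?d = s" using pos_eq_iff[OF ij(1) _ ii] True by auto
      thus "r = pos lam j (s + ?d)" using yt \<open>y = j\<close> \<open>?d \<le> t\<close> by auto
    qed
    also have "\<dots> = (if s + ?d = lam ! j - 1 then c j else 0)" using sd ij by (simp add: gv_pos)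
    also have "\<dots> = gv lam (\<lambda>k. if k = i then c j else 0) $ pos lam x s"
      using ii True ij pl nth_mem[OF ij(1)] by (auto simp: gv_pos)
    finally show ?thesis .
  next
    case False
    have "(pmat (sum_list lam) (tmap lam i j) *\<^sub>v gv lam c) $ pos lam x s = 0"
    proof (rule pmat_mult_vec_none[OF p gv_carrier])
      fix r assume r: "r < sum_list lam"
      from decE[OF r] obtain y t where yt: "y < length lam" "t < lam ! y" "r = pos lam y t" by metis
      show "tmap lam i j r \<noteq> Some (pos lam x s)"
      proof
        assume e: "tmap lam i j r = Some (pos lam x s)"
        from e yt have "y = j" "pos lam i (t - (lam ! j - lam ! i)) = pos lam x s" by (auto simp: tmap_pos split: if_splits)
        moreover have "t - (lam ! j - lam ! i) < lam ! i" using yt \<open>y = j\<close> tmap_bound by auto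
        ultimately show False using pos_eq_iff[OF ij(1) _ ii] False by auto
      qed
    qed
    thus ?thesis using ii False by (simp add: gv_pos)
  qed
qed auto

end

lemma pclosed_prj: "pclosed (sum_list lam) (prj lam i)"
  unfolding pclosed_def prj_def by (auto split: prod.splits if_splits)

lemma prj_comm: "(pmat (sum_list lam) (prj lam i) :: 'a::field mat) * J_part lam = J_part lam * pmat (sum_list lam) (prj lam i)"
  unfolding J_part_pmat pmat_mult[OF pclosed_jsh] pmat_mult[OF pclosed_prj]
proof (rule pmat_cong)
  fix r assume "r < sum_list lam"
  from decE[OF this] obtain x s where ii: "x < length lam" "s < lam ! x" "r = pos lam x s" by metis
  have b1: "s - 1 < lam ! x" using ii by auto
  show "pcomp (prj lam i) (jsh lam) r = pcomp (jsh lam) (prj lam i) r"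
    using ii b1 by (auto simp: pcomp_def jsh_pos prj_pos)
qed

lemma prj_sq: "(pmat (sum_list lam) (prj lam i) :: 'a::field mat) * pmat (sum_list lam) (prj lam i) = 1 \<cdot>\<^sub>m pmat (sum_list lam) (prj lam i)"
proof -
  have "(pmat (sum_list lam) (prj lam i) :: 'a mat) * pmat (sum_list lam) (prj lam i) = pmat (sum_list lam) (prj lam i)"
    unfolding pmat_mult[OF pclosed_prj]
  proof (rule pmat_cong)
    fix r assume "r < sum_list lam"
    from decE[OF this] obtain x s where ii: "x < length lam" "s < lam ! x" "r = pos lam x s" by metis
    show "pcomp (prj lam i) (prj lam i) r = prj lam i r"
      using ii by (auto simp: pcomp_def prj_pos)
  qed
  moreover have "1 \<cdot>\<^sub>m pmat (sum_list lam) (prj lam i) = (pmat (sum_list lam) (prj lam i) :: 'a mat)"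
    by (rule eq_matI) auto
  ultimately show ?thesis by simp
qed

lemma prj_gv: "pmat (sum_list lam) (prj lam i) *\<^sub>v gv lam c = (gv lam (\<lambda>k. if k = i then c i else 0) :: 'a::field vec)"
proof (rule vec_eq_pos)
  fix x s assume ii: "x < length lam" "s < lam ! x"
  have p: "pos lam x s < sum_list lam" by (rule pos_lt[OF ii])
  show "(pmat (sum_list lam) (prj lam i) *\<^sub>v gv lam c) $ pos lam x s = gv lam (\<lambda>k. if k = i then c i else (0::'a)) $ pos lam x s"
  proof (cases "x = i")
    case True
    have "(pmat (sum_list lam) (prj lam i) *\<^sub>v gv lam c) $ pos lam x s = gv lam c $ pos lam x s"
    proof (rule pmat_mult_vec_unique[OF p gv_carrier p])
      show "prj lam i (pos lam x s) = Some (pos lam x s)" using ii True by (simp add: prj_pos)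
      fix r assume r: "r < sum_list lam" and e: "prj lam i r = Some (pos lam x s)"
      from decE[OF r] obtain y t where yt: "y < length lam" "t < lam ! y" "r = pos lam y t" by metis
      from e yt show "r = pos lam x s" by (auto simp: prj_pos split: if_splits)
    qed
    thus ?thesis using ii True by (simp add: gv_pos)
  next
    case False
    have "(pmat (sum_list lam) (prj lam i) *\<^sub>v gv lam c) $ pos lam x s = 0"
    proof (rule pmat_mult_vec_none[OF p gv_carrier])
      fix r assume r: "r < sum_list lam"
      from decE[OF r] obtain y t where yt: "y < length lam" "t < lam ! y" "r = pos lam y t" by metis
      show "prj lam i r \<noteq> Some (pos lam x s)"
        using yt False pos_eq_iff[OF yt(1,2) ii] by (auto simp: prj_pos)
    qed
    thus ?thesis using ii False by (simp add: gv_pos)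
  qed
qed auto

definition reach :: "nat list \<Rightarrow> (nat \<Rightarrow> 'a::field) \<Rightarrow> (nat \<Rightarrow> 'a) \<Rightarrow> bool" where
  "reach lam c c' \<longleftrightarrow> orel (sum_list lam) (J_part lam, gv lam c) (J_part lam, gv lam c')"

lemma reach_refl: "reach lam c c"
  unfolding reach_def by (rule orel_refl[OF J_part_dim gv_carrier])

lemma reach_trans: "reach lam c c' \<Longrightarrow> reach lam c' c'' \<Longrightarrow> reach lam c c''"
  unfolding reach_def by (rule orel_trans[OF _ _ J_part_dim gv_carrier])

lemma move1: assumes pl: "\<forall>a\<in>set lam. 0 < a" and ij: "i < length lam" "j < length lam" "lam ! i \<le> lam ! j" "i \<noteq> j"
  shows "reach lam c (\<lambda>k. c k + x * (if k = i then c j else (0::'a::field)))"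
proof -
  have ipos: "0 < lam ! i" using pl ij(1) by auto
  have "orel (sum_list lam) (J_part lam, gv lam c)
     (J_part lam, gv lam c + x \<cdot>\<^sub>v (pmat (sum_list lam) (tmap lam i j) *\<^sub>v gv lam c))"
    by (rule shear_orel[OF J_part_dim pmat_carrier tmap_comm[OF ij(1-3) ipos] tmap_sq[OF ij(1-3) ipos ij(4)]]) auto
  thus ?thesis unfolding reach_def tmap_gv[OF ij(1-3) ipos pl] gv_add_smult .
qed

lemma move2: assumes "1 + x \<noteq> (0::'a::field)"
  shows "reach lam c (\<lambda>k. c k + x * (if k = i then c i else (0::'a)))"
proof -
  have "orel (sum_list lam) (J_part lam, gv lam c)
     (J_part lam, gv lam c + x \<cdot>\<^sub>v (pmat (sum_list lam) (prj lam i) *\<^sub>v gv lam c))"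
    by (rule shear_orel[OF J_part_dim pmat_carrier prj_comm prj_sq]) (use assms in auto)
  thus ?thesis unfolding reach_def prj_gv gv_add_smult .
qed

lemma reach_gv_cong: "reach lam c c' \<Longrightarrow> gv lam c' = (gv lam c'' :: 'a::field vec) \<Longrightarrow> reach lam c c''"
  unfolding reach_def by simp

lemma kill: assumes pl: "\<forall>a\<in>set lam. 0 < a" and q: "q < length lam" and c1q: "c1 q \<noteq> (0::'a::field)"
  and mono: "\<forall>k<length lam. c1 k \<noteq> 0 \<longrightarrow> lam ! k \<le> lam ! q"
  and S: "finite S"
  shows "q \<notin> S \<Longrightarrow> S \<subseteq> {..<length lam} \<Longrightarrow> reach lam c1 (\<lambda>k. if k \<in> S then 0 else c1 k)"
  using S
proof (induction S rule: finite_induct)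
  case empty thus ?case using reach_refl[of lam c1] by simp
next
  case (insert i S)
  let ?cS = "\<lambda>k. if k \<in> S then 0 else c1 k"
  have IH: "reach lam c1 ?cS" using insert by auto
  have i: "i < length lam" "i \<noteq> q" using insert.prems by auto
  show ?case
  proof (cases "c1 i = 0")
    case True
    have "(\<lambda>k. if k \<in> insert i S then 0 else c1 k) = ?cS" using True by (auto simp: fun_eq_iff)
    thus ?thesis using IH by simp
  next
    case False
    have le: "lam ! i \<le> lam ! q" using mono i False by auto
    let ?x = "- (c1 i / c1 q)"
    have m: "reach lam ?cS (\<lambda>k. ?cS k + ?x * (if k = i then ?cS q else 0))"
      by (rule move1[OF pl i(1) q le i(2)])
    have "(\<lambda>k. ?cS k + ?x * (if k = i then ?cS q else 0)) = (\<lambda>k. if k \<in> insert i S then 0 else c1 k)"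
      using insert.prems insert.hyps c1q by (auto simp: fun_eq_iff)
    thus ?thesis using reach_trans[OF IH m] by simp
  qed
qed

lemma stepB_gv: assumes l: "is_partition n lam"
  shows "\<exists>q\<in>enh_q lam. reach lam c (\<lambda>k. if k = q then 1 else (0::'a::field))"
proof -
  have pl: "\<forall>a\<in>set lam. 0 < a" and so: "sorted_wrt (\<ge>) lam" using l by (auto simp: is_partition_def)
  let ?t = "length lam"
  show ?thesis
  proof (cases "\<forall>k<?t. c k = 0")
    case True
    have "?t \<in> enh_q lam" by (simp add: enh_q_def)
    moreover have "reach lam c (\<lambda>k. if k = ?t then 1 else 0)"
      by (rule reach_gv_cong[OF reach_refl]) (rule gv_cong, use True in auto)
    ultimately show ?thesis by blast
  next
    case False
    then obtain k0 where k0: "k0 < ?t" "c k0 \<noteq> 0" by auto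
    define i0 where "i0 = (LEAST k. k < ?t \<and> c k \<noteq> 0)"
    have i0: "i0 < ?t" "c i0 \<noteq> 0" using LeastI[of "\<lambda>k. k < ?t \<and> c k \<noteq> 0" k0] k0 unfolding i0_def by auto
    have i0min: "i0 \<le> k" if "k < ?t" "c k \<noteq> 0" for k
      unfolding i0_def by (rule Least_le) (use that in auto)
    define b where "b = lam ! i0"
    have bin: "b \<in> set lam" unfolding b_def using i0 by simp
    define q where "q = length (filter (\<lambda>a. b < a) lam)"
    have qb: "q < ?t" "lam ! q = b" using filter_gt_index[OF so bin] unfolding q_def by auto
    have qenh: "q \<in> enh_q lam" unfolding enh_q_def q_def using bin by blast
    have mono0: "lam ! k \<le> lam ! q" if "k < ?t" "c k \<noteq> 0" for k
    proof -
      have "i0 \<le> k" by (rule i0min[OF that])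
      thus ?thesis unfolding qb b_def using sorted_wrt_nth_less[OF so _ that(1), of i0] by (cases "i0 = k") auto
    qed
    obtain c1 where r1: "reach lam c c1" and c1q: "c1 q \<noteq> 0"
      and mono: "\<forall>k<?t. c1 k \<noteq> 0 \<longrightarrow> lam ! k \<le> lam ! q"
    proof (cases "c q = 0")
      case False
      thus ?thesis using that[OF reach_refl] mono0 by auto
    next
      case True
      have qi: "q \<noteq> i0" using True i0 by auto
      have le: "lam ! q \<le> lam ! i0" using qb b_def by simp
      let ?c1 = "\<lambda>k. c k + 1 * (if k = q then c i0 else 0)"
      have "reach lam c ?c1" by (rule move1[OF pl qb(1) i0(1) le qi])
      moreover have "?c1 q \<noteq> 0" using True i0 by simp
      moreover have "\<forall>k<?t. ?c1 k \<noteq> 0 \<longrightarrow> lam ! k \<le> lam ! q" using mono0 by auto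
      ultimately show ?thesis by (rule that)
    qed
    define S where "S = {k. k < ?t \<and> k \<noteq> q}"
    have Sf: "finite S" unfolding S_def by simp
    let ?c2 = "\<lambda>k. if k \<in> S then 0 else c1 k"
    have r2: "reach lam c1 ?c2" by (rule kill[OF pl qb(1) c1q mono Sf]) (auto simp: S_def)
    let ?x = "1 / c1 q - 1"
    have x: "1 + ?x \<noteq> 0" using c1q by simp
    have r3: "reach lam ?c2 (\<lambda>k. ?c2 k + ?x * (if k = q then ?c2 q else 0))" by (rule move2[OF x])
    have "gv lam (\<lambda>k. ?c2 k + ?x * (if k = q then ?c2 q else 0)) = gv lam (\<lambda>k. if k = q then 1 else (0::'a))"
    proof (rule gv_cong)
      fix k assume k: "k < ?t"
      show "?c2 k + ?x * (if k = q then ?c2 q else 0) = (if k = q then 1 else 0)"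
        using k c1q by (auto simp: S_def field_simps)
    qed
    hence "reach lam c (\<lambda>k. if k = q then 1 else 0)"
      using reach_trans[OF reach_trans[OF r1 r2] r3] by (simp add: reach_def)
    thus ?thesis using qenh by blast
  qed
qed

lemma u_vec_gv_all: assumes pl: "\<forall>a\<in>set lam. 0 < a" and q: "q \<le> length lam"
  shows "u_vec (sum_list lam) lam q = (gv lam (\<lambda>k. if k = q then 1 else 0) :: 'a::field vec)"
proof (cases "q < length lam")
  case True thus ?thesis by (rule u_vec_gv[OF pl])
next
  case False
  have "u_vec (sum_list lam) lam q = (0\<^sub>v (sum_list lam) :: 'a vec)" using False by (simp add: u_vec_def)
  also have "\<dots> = gv lam (\<lambda>_. 0)" by (rule gv_zero[symmetric])
  also have "\<dots> = gv lam (\<lambda>k. if k = q then 1 else 0)" by (rule gv_cong) (use False in auto)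
  finally show ?thesis .
qed

lemma stepB: assumes l: "is_partition n lam" and w: "w \<in> carrier_vec n"
  shows "\<exists>q\<in>enh_q lam. orel n (J_part lam, w) (J_part lam :: 'a::field mat, u_vec n lam q)"
proof -
  have pl: "\<forall>a\<in>set lam. 0 < a" and n: "n = sum_list lam" using l by (auto simp: is_partition_def)
  let ?c = "\<lambda>i. w $ gen lam i"
  have t: "orel n (J_part lam, w) (J_part lam :: 'a mat, gv lam ?c)" unfolding n
    by (rule translate[OF pl]) (use w n in simp)
  from stepB_gv[OF l, of ?c] obtain q where q: "q \<in> enh_q lam" and r: "reach lam ?c (\<lambda>k. if k = q then 1 else (0::'a))"
    by blast
  have "u_vec n lam q = (gv lam (\<lambda>k. if k = q then 1 else 0) :: 'a vec)" unfolding n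
    by (rule u_vec_gv_all[OF pl enh_q_le[OF q]])
  hence "orel n (J_part lam :: 'a mat, gv lam ?c) (J_part lam, u_vec n lam q)" using r n by (simp add: reach_def)
  from orel_trans[OF t this] have "orel n (J_part lam, w) (J_part lam :: 'a mat, u_vec n lam q)"
    using J_part_dim[of lam] w n by simp
  thus ?thesis using q by blast
qed

lemma sort_J: assumes pm: "\<forall>a\<in>set mu. 0 < a"
  shows "\<exists>lam A B. is_partition (sum_list mu) lam \<and> A \<in> carrier_mat (sum_list mu) (sum_list mu) \<and>
     B \<in> carrier_mat (sum_list mu) (sum_list mu) \<and> A * B = 1\<^sub>m (sum_list mu) \<and> B * A = 1\<^sub>m (sum_list mu) \<and>
     (J_part lam :: 'a::field mat) = A * J_part mu * B"
proof -
  define lam where "lam = rev (sort mu)"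
  have ms: "mset lam = mset mu" unfolding lam_def by simp
  have sum: "sum_list lam = sum_list mu" by (metis ms sum_mset_sum_list)
  have part: "is_partition (sum_list mu) lam"
    unfolding is_partition_def using pm sum unfolding lam_def by (auto simp: sorted_wrt_rev)
  obtain p where p: "p permutes {..<length mu}" and pl: "permute_list p mu = lam"
    using mset_eq_permutation[OF ms] by metis
  have len: "length lam = length mu" using pl by auto
  have lamp: "lam ! i = mu ! p i" if "i < length mu" for i
    using that pl[symmetric] by (simp add: permute_list_def)
  have pin: "p i < length mu" if "i < length mu" for i using permutes_in_image[OF p] that by auto
  have pinv: "Hilbert_Choice.inv p i < length mu" if "i < length mu" for i using permutes_in_image[OF permutes_inv[OF p]] that by auto
  note pinvs = permutes_inverses[OF p]
  let ?n = "sum_list mu"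
  define tau where "tau r = (case dec lam r of (i, s) \<Rightarrow> pos mu (p i) s)" for r
  define sig where "sig r = (case dec mu r of (i, s) \<Rightarrow> pos lam (Hilbert_Choice.inv p i) s)" for r
  have tau_pos: "tau (pos lam i s) = pos mu (p i) s" if "i < length lam" "s < lam ! i" for i s
    using that by (simp add: tau_def dec_pos)
  have sig_pos: "sig (pos mu i s) = pos lam (Hilbert_Choice.inv p i) s" if "i < length mu" "s < mu ! i" for i s
    using that by (simp add: sig_def dec_pos)
  have tau_lt: "tau r < ?n" if "r < ?n" for r
  proof -
    from decE[OF that[folded sum]] obtain i s where ii: "i < length lam" "s < lam ! i" "r = pos lam i s" by metis
    thus ?thesis using tau_pos[OF ii(1,2)] pin[of i] lamp[of i] len by (auto intro!: pos_lt)
  qed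
  have sig_lt: "sig r < ?n" if "r < ?n" for r
  proof -
    from decE[OF that] obtain i s where ii: "i < length mu" "s < mu ! i" "r = pos mu i s" by metis
    have "s < lam ! Hilbert_Choice.inv p i" using lamp[OF pinv[OF ii(1)]] pinvs ii by simp
    thus ?thesis using sig_pos[OF ii(1,2)] pinv[of i] ii len sum by (auto intro!: pos_lt[of _ lam, simplified sum])
  qed
  have pct: "pclosed ?n (\<lambda>r. Some (tau r))" using tau_lt by (auto simp: pclosed_def)
  have pcs: "pclosed ?n (\<lambda>r. Some (sig r))" using sig_lt by (auto simp: pclosed_def)
  define A :: "'a mat" where "A = pmat ?n (\<lambda>r. Some (sig r))"
  define B :: "'a mat" where "B = pmat ?n (\<lambda>r. Some (tau r))"
  have AB: "A * B = 1\<^sub>m ?n" unfolding A_def B_def pmat_mult[OF pct] pmat_Some[symmetric]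
  proof (rule pmat_cong)
    fix r assume "r < ?n"
    from decE[OF this[folded sum]] obtain i s where ii: "i < length lam" "s < lam ! i" "r = pos lam i s" by metis
    have "s < mu ! p i" using ii lamp len by simp
    thus "pcomp (\<lambda>r. Some (sig r)) (\<lambda>r. Some (tau r)) r = Some r"
      using ii tau_pos sig_pos pin len pinvs by (simp add: pcomp_def)
  qed
  have BA: "B * A = 1\<^sub>m ?n" unfolding A_def B_def pmat_mult[OF pcs] pmat_Some[symmetric]
  proof (rule pmat_cong)
    fix r assume "r < ?n"
    from decE[OF this] obtain i s where ii: "i < length mu" "s < mu ! i" "r = pos mu i s" by metis
    have "s < lam ! Hilbert_Choice.inv p i" using lamp[OF pinv[OF ii(1)]] pinvs ii by simp
    thus "pcomp (\<lambda>r. Some (tau r)) (\<lambda>r. Some (sig r)) r = Some r"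
      using ii tau_pos sig_pos pinv len pinvs by (simp add: pcomp_def)
  qed
  have J: "(J_part lam :: 'a mat) = A * J_part mu * B"
  proof -
    have "A * J_part mu * B = pmat ?n (pcomp (\<lambda>r. Some (sig r)) (pcomp (jsh mu) (\<lambda>r. Some (tau r))))"
      unfolding A_def B_def J_part_pmat
    proof -
      have pc2: "pclosed ?n (pcomp (jsh mu) (\<lambda>r. Some (tau r)))"
        using pclosed_jsh[of mu] tau_lt unfolding pclosed_def pcomp_def by auto
      have "(pmat ?n (\<lambda>r. Some (sig r)) :: 'a mat) * pmat ?n (jsh mu) * pmat ?n (\<lambda>r. Some (tau r))
        = pmat ?n (\<lambda>r. Some (sig r)) * (pmat ?n (jsh mu) * pmat ?n (\<lambda>r. Some (tau r)))"
        by (rule assoc_mult_mat) auto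
      also have "\<dots> = pmat ?n (pcomp (\<lambda>r. Some (sig r)) (pcomp (jsh mu) (\<lambda>r. Some (tau r))))"
        unfolding pmat_mult[OF pct] pmat_mult[OF pc2] ..
      finally show "(pmat ?n (\<lambda>r. Some (sig r)) :: 'a mat) * pmat ?n (jsh mu) * pmat ?n (\<lambda>r. Some (tau r)) =
        pmat ?n (pcomp (\<lambda>r. Some (sig r)) (pcomp (jsh mu) (\<lambda>r. Some (tau r))))" .
    qed
    also have "\<dots> = pmat ?n (jsh lam)"
    proof (rule pmat_cong)
      fix r assume "r < ?n"
      from decE[OF this[folded sum]] obtain i s where ii: "i < length lam" "s < lam ! i" "r = pos lam i s" by metis
      have s': "s < mu ! p i" using ii lamp len by simp
      have s1: "s - 1 < mu ! p i" "s - 1 < lam ! i" using s' ii by auto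
      show "pcomp (\<lambda>r. Some (sig r)) (pcomp (jsh mu) (\<lambda>r. Some (tau r))) r = jsh lam r"
        using ii s' s1 tau_pos sig_pos pin len pinvs by (simp add: pcomp_def jsh_pos)
    qed
    finally show ?thesis unfolding J_part_pmat sum by simp
  qed
  have "A \<in> carrier_mat ?n ?n" "B \<in> carrier_mat ?n ?n" unfolding A_def B_def by auto
  thus ?thesis using part AB BA J by blast
qed

lemma pow_comm: "(X :: 'a::field mat) \<in> carrier_mat n n \<Longrightarrow> X * X ^\<^sub>m k = X ^\<^sub>m k * X"
proof (induction k)
  case 0 thus ?case by simp
next
  case (Suc k)
  have "X * X ^\<^sub>m Suc k = (X * X ^\<^sub>m k) * X" using Suc.prems by (simp add: assoc_mult_mat[of _ n n _ n _ n])
  also have "\<dots> = X ^\<^sub>m Suc k * X" using Suc by simp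
  finally show ?case .
qed

lemma kernel_vec: assumes X: "(X :: 'a::field mat) \<in> carrier_mat n n" and nil: "X ^\<^sub>m k = 0\<^sub>m n n" and n: "0 < n"
  shows "\<exists>v \<in> carrier_vec n. v \<noteq> 0\<^sub>v n \<and> X *\<^sub>v v = 0\<^sub>v n"
proof -
  define k0 where "k0 = (LEAST k. X ^\<^sub>m k = 0\<^sub>m n n)"
  have k0: "X ^\<^sub>m k0 = 0\<^sub>m n n" unfolding k0_def by (rule LeastI[of _ k], rule nil)
  have "X ^\<^sub>m 0 \<noteq> 0\<^sub>m n n"
  proof
    assume "X ^\<^sub>m 0 = 0\<^sub>m n n"
    hence "(X ^\<^sub>m 0) $$ (0, 0) = (0\<^sub>m n n :: 'a mat) $$ (0,0)" by simp
    thus False using X n by simp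
  qed
  hence "k0 \<noteq> 0" using k0 by auto
  then obtain k1 where k1: "k0 = Suc k1" by (cases k0) auto
  have nz: "X ^\<^sub>m k1 \<noteq> 0\<^sub>m n n" using not_less_Least[of k1 "\<lambda>k. X ^\<^sub>m k = 0\<^sub>m n n"] k1 unfolding k0_def by auto
  obtain i j where ij: "i < n" "j < n" "(X ^\<^sub>m k1) $$ (i, j) \<noteq> 0"
  proof (rule ccontr)
    assume "\<not> thesis"
    hence "\<forall>i<n. \<forall>j<n. (X ^\<^sub>m k1) $$ (i, j) = 0" using that by blast
    hence "X ^\<^sub>m k1 = 0\<^sub>m n n" using X by (intro eq_matI) auto
    thus False using nz by simp
  qed
  define v where "v = col (X ^\<^sub>m k1) j"
  have v: "v \<in> carrier_vec n" unfolding v_def using X by (intro carrier_vecI) simp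
  have "v $ i \<noteq> 0" unfolding v_def using ij X by simp
  hence vnz: "v \<noteq> 0\<^sub>v n" using ij(1) by (metis index_zero_vec(1))
  have "X *\<^sub>v v = col (X * X ^\<^sub>m k1) j" unfolding v_def by (rule col_mult2[OF X sq_pow[OF X] ij(2), symmetric])
  also have "X * X ^\<^sub>m k1 = X ^\<^sub>m k0" using pow_comm[OF X] k1 by simp
  finally have "X *\<^sub>v v = 0\<^sub>v n" using k0 ij by simp
  thus ?thesis using v vnz by blast
qed

lemma first_col: assumes v: "(v :: 'a::field vec) \<in> carrier_vec n" and vnz: "v \<noteq> 0\<^sub>v n"
  shows "\<exists>P Q. P \<in> carrier_mat n n \<and> Q \<in> carrier_mat n n \<and> P * Q = 1\<^sub>m n \<and> Q * P = 1\<^sub>m n \<and> col P 0 = v"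
proof -
  obtain l where l: "l < n" "v $ l \<noteq> 0"
  proof (rule ccontr)
    assume "\<not> thesis"
    hence "\<forall>l<n. v $ l = 0" using that by blast
    hence "v = 0\<^sub>v n" using v by (intro eq_vecI) auto
    thus False using vnz by simp
  qed
  have n: "0 < n" using l by simp
  define sw where "sw r = (if r = 0 then l else if r = l then 0 else r)" for r
  have swsw: "sw (sw r) = r" for r by (simp add: sw_def)
  have swlt: "r < n \<Longrightarrow> sw r < n" for r using l n by (simp add: sw_def)
  have pcs: "pclosed n (\<lambda>r. Some (sw r))" using swlt by (auto simp: pclosed_def)
  define S :: "'a mat" where "S = pmat n (\<lambda>r. Some (sw r))"
  have S: "S \<in> carrier_mat n n" unfolding S_def by simp
  have SS: "S * S = 1\<^sub>m n" unfolding S_def pmat_mult[OF pcs] pmat_Some[symmetric]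
    by (rule pmat_cong) (simp add: pcomp_def swsw)
  define a where "a = S *\<^sub>v v"
  have a: "a \<in> carrier_vec n" unfolding a_def using S v by simp
  have a0: "a $ 0 = v $ l" unfolding a_def S_def
    by (rule pmat_mult_vec_unique[OF n v l(1)]) (auto simp: sw_def split: if_splits)
  hence a0nz: "a $ 0 \<noteq> 0" using l by simp
  define P1 :: "'a mat" where "P1 = mat n n (\<lambda>(r, c). if c = 0 then a $ r else if r = c then 1 else 0)"
  define Q1 :: "'a mat" where "Q1 = mat n n (\<lambda>(r, c). if c = 0 then (if r = 0 then 1 / a $ 0 else - (a $ r) / a $ 0) else if r = c then 1 else 0)"
  have P1: "P1 \<in> carrier_mat n n" and Q1: "Q1 \<in> carrier_mat n n" unfolding P1_def Q1_def by auto
  have split0: "(\<Sum>s\<in>{0..<n}. f s) = f 0 + (\<Sum>s\<in>{Suc 0..<n}. f s)" for f :: "nat \<Rightarrow> 'a"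
    using n by (simp add: sum.atLeast_Suc_lessThan)
  have PQ: "P1 * Q1 = 1\<^sub>m n"
  proof (rule eq_matI)
    fix r c assume "r < dim_row (1\<^sub>m n :: 'a mat)" "c < dim_col (1\<^sub>m n :: 'a mat)"
    hence rc: "r < n" "c < n" by auto
    have "(P1 * Q1) $$ (r, c) = (\<Sum>s\<in>{0..<n}. P1 $$ (r, s) * Q1 $$ (s, c))"
      using rc P1 Q1 by (simp add: scalar_prod_def)
    also have "\<dots> = (1\<^sub>m n :: 'a mat) $$ (r, c)"
    proof (cases "c = 0")
      case False
      have "(\<Sum>s\<in>{0..<n}. P1 $$ (r, s) * Q1 $$ (s, c)) = (\<Sum>s\<in>{0..<n}. if s = c then P1 $$ (r, c) else 0)"
        by (rule sum.cong) (use rc False in \<open>auto simp: Q1_def\<close>)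
      also have "\<dots> = P1 $$ (r, c)" using rc by simp
      finally show ?thesis using rc False by (simp add: P1_def)
    next
      case True
      have "(\<Sum>s\<in>{0..<n}. P1 $$ (r, s) * Q1 $$ (s, c)) = a $ r / a $ 0 + (\<Sum>s\<in>{Suc 0..<n}. P1 $$ (r, s) * Q1 $$ (s, c))"
        unfolding split0 using rc True n by (simp add: P1_def Q1_def)
      also have "(\<Sum>s\<in>{Suc 0..<n}. P1 $$ (r, s) * Q1 $$ (s, c)) = (\<Sum>s\<in>{Suc 0..<n}. if s = r then - (a $ r) / a $ 0 else 0)"
        by (rule sum.cong) (use rc True in \<open>auto simp: P1_def Q1_def\<close>)
      also have "\<dots> = (if r \<in> {Suc 0..<n} then - (a $ r) / a $ 0 else 0)" by simp
      finally show ?thesis using rc True a0nz by auto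
    qed
    finally show "(P1 * Q1) $$ (r, c) = (1\<^sub>m n :: 'a mat) $$ (r, c)" .
  qed (use P1 Q1 in auto)
  have QP: "Q1 * P1 = 1\<^sub>m n"
  proof (rule eq_matI)
    fix r c assume "r < dim_row (1\<^sub>m n :: 'a mat)" "c < dim_col (1\<^sub>m n :: 'a mat)"
    hence rc: "r < n" "c < n" by auto
    have "(Q1 * P1) $$ (r, c) = (\<Sum>s\<in>{0..<n}. Q1 $$ (r, s) * P1 $$ (s, c))"
      using rc P1 Q1 by (simp add: scalar_prod_def)
    also have "\<dots> = (1\<^sub>m n :: 'a mat) $$ (r, c)"
    proof (cases "c = 0")
      case False
      have "(\<Sum>s\<in>{0..<n}. Q1 $$ (r, s) * P1 $$ (s, c)) = (\<Sum>s\<in>{0..<n}. if s = c then Q1 $$ (r, c) else 0)"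
        by (rule sum.cong) (use rc False in \<open>auto simp: P1_def\<close>)
      also have "\<dots> = Q1 $$ (r, c)" using rc by simp
      finally show ?thesis using rc False by (simp add: Q1_def)
    next
      case True
      have "(\<Sum>s\<in>{0..<n}. Q1 $$ (r, s) * P1 $$ (s, c)) = Q1 $$ (r, 0) * a $ 0 + (\<Sum>s\<in>{Suc 0..<n}. Q1 $$ (r, s) * P1 $$ (s, c))"
        unfolding split0 using rc True n by (simp add: P1_def)
      also have "(\<Sum>s\<in>{Suc 0..<n}. Q1 $$ (r, s) * P1 $$ (s, c)) = (\<Sum>s\<in>{Suc 0..<n}. if s = r then a $ r else 0)"
        by (rule sum.cong) (use rc True in \<open>auto simp: P1_def Q1_def\<close>)
      also have "\<dots> = (if r \<in> {Suc 0..<n} then a $ r else 0)" by simp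
      finally show ?thesis using rc True a0nz by (auto simp: Q1_def)
    qed
    finally show "(Q1 * P1) $$ (r, c) = (1\<^sub>m n :: 'a mat) $$ (r, c)" .
  qed (use P1 Q1 in auto)
  have colP1: "col P1 0 = a" unfolding P1_def using a n by (intro eq_vecI) auto
  define P where "P = S * P1"
  define Q where "Q = Q1 * S"
  have Pc: "P \<in> carrier_mat n n" and Qc: "Q \<in> carrier_mat n n" unfolding P_def Q_def using S P1 Q1 by auto
  have "P * Q = S * (P1 * Q1) * S" unfolding P_def Q_def using S P1 Q1 by (simp add: sq_assoc[of _ n])
  hence PQ': "P * Q = 1\<^sub>m n" using PQ SS S by simp
  have "Q * P = Q1 * (S * S) * P1" unfolding P_def Q_def using S P1 Q1 by (simp add: sq_assoc[of _ n])
  hence QP': "Q * P = 1\<^sub>m n" using QP SS Q1 by simp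
  have "col P 0 = S *\<^sub>v col P1 0" unfolding P_def by (rule col_mult2[OF S P1 n])
  also have "\<dots> = S *\<^sub>v a" by (simp only: colP1)
  also have "\<dots> = (S * S) *\<^sub>v v" unfolding a_def using S v by simp
  also have "\<dots> = v" using SS v by simp
  finally show ?thesis using Pc Qc PQ' QP' by blast
qed

lemma fb_mult: assumes "A1 \<in> carrier_mat 1 1" "B1 \<in> carrier_mat 1 m" "D1 \<in> carrier_mat m m"
  "A2 \<in> carrier_mat 1 1" "B2 \<in> carrier_mat 1 m" "D2 \<in> carrier_mat m m"
  shows "four_block_mat A1 B1 (0\<^sub>m m 1) D1 * four_block_mat A2 B2 (0\<^sub>m m 1) D2
    = four_block_mat (A1 * A2) (A1 * B2 + B1 * D2) (0\<^sub>m m 1) (D1 * (D2 :: 'a::field mat))"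
proof -
  have "four_block_mat A1 B1 (0\<^sub>m m 1) D1 * four_block_mat A2 B2 (0\<^sub>m m 1) D2
    = four_block_mat (A1 * A2 + B1 * 0\<^sub>m m 1) (A1 * B2 + B1 * D2) (0\<^sub>m m 1 * A2 + D1 * 0\<^sub>m m 1) (0\<^sub>m m 1 * B2 + D1 * D2)"
    by (rule mult_four_block_mat) (use assms in auto)
  also have "A1 * A2 + B1 * 0\<^sub>m m 1 = A1 * A2" using assms by (simp add: right_mult_zero_mat[of _ 1 m])
  also have "0\<^sub>m m 1 * A2 + D1 * 0\<^sub>m m 1 = (0\<^sub>m m 1 :: 'a mat)" using assms
    by (simp add: right_mult_zero_mat[of _ m m] left_mult_zero_mat[of _ 1 1])
  also have "0\<^sub>m m 1 * B2 + D1 * D2 = D1 * D2" using assms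
    by (simp add: left_mult_zero_mat[of _ 1 m])
  finally show ?thesis .
qed

lemma one_fb: "four_block_mat (1\<^sub>m 1) (0\<^sub>m 1 m) (0\<^sub>m m 1) (1\<^sub>m m) = (1\<^sub>m (Suc m) :: 'a::field mat)"
  by (rule eq_matI) auto

lemma fb_pow: assumes B2: "B2 \<in> carrier_mat 1 m" and B4: "B4 \<in> carrier_mat m m"
  shows "\<exists>a Y. a \<in> carrier_mat 1 1 \<and> Y \<in> carrier_mat 1 m \<and>
    four_block_mat (0\<^sub>m 1 1) B2 (0\<^sub>m m 1) B4 ^\<^sub>m k = four_block_mat a Y (0\<^sub>m m 1) (B4 ^\<^sub>m k :: 'a::field mat)"
proof (induction k)
  case 0
  have "four_block_mat (0\<^sub>m 1 1) B2 (0\<^sub>m m 1) B4 ^\<^sub>m 0 = (1\<^sub>m (Suc m) :: 'a mat)" using B4 by simp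
  also have "\<dots> = four_block_mat (1\<^sub>m 1) (0\<^sub>m 1 m) (0\<^sub>m m 1) (B4 ^\<^sub>m 0)" using B4 by (simp add: one_fb)
  finally show ?case by (intro exI[of _ "1\<^sub>m 1"] exI[of _ "0\<^sub>m 1 m"]) auto
next
  case (Suc k)
  then obtain a Y where aY: "a \<in> carrier_mat 1 1" "Y \<in> carrier_mat 1 m"
    and e: "four_block_mat (0\<^sub>m 1 1) B2 (0\<^sub>m m 1) B4 ^\<^sub>m k = four_block_mat a Y (0\<^sub>m m 1) (B4 ^\<^sub>m k :: 'a mat)" by blast
  have "four_block_mat (0\<^sub>m 1 1) B2 (0\<^sub>m m 1) B4 ^\<^sub>m Suc k = four_block_mat a Y (0\<^sub>m m 1) (B4 ^\<^sub>m k) * four_block_mat (0\<^sub>m 1 1) B2 (0\<^sub>m m 1) B4"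
    using e by simp
  also have "\<dots> = four_block_mat (a * 0\<^sub>m 1 1) (a * B2 + Y * B4) (0\<^sub>m m 1) (B4 ^\<^sub>m k * B4)"
    by (rule fb_mult) (use aY B2 B4 in auto)
  finally show ?case using aY B2 B4 by (intro exI[of _ "a * 0\<^sub>m 1 1"] exI[of _ "a * B2 + Y * B4"]) auto
qed

definition strict_upper :: "nat \<Rightarrow> 'a::field mat \<Rightarrow> bool" where
  "strict_upper n T \<longleftrightarrow> (\<forall>i<n. \<forall>j<n. j \<le> i \<longrightarrow> T $$ (i, j) = 0)"

lemma triang: "(X :: 'a::field mat) \<in> carrier_mat n n \<Longrightarrow> X ^\<^sub>m k = 0\<^sub>m n n \<Longrightarrow>
  \<exists>P Q T. P \<in> carrier_mat n n \<and> Q \<in> carrier_mat n n \<and> T \<in> carrier_mat n n \<and> P * Q = 1\<^sub>m n \<and> Q * P = 1\<^sub>m n \<and>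
    X = P * T * Q \<and> strict_upper n T"
proof (induction n arbitrary: X)
  case 0
  have "X = 1\<^sub>m 0 * X * 1\<^sub>m 0" using 0 by simp
  thus ?case using 0 by (intro exI[of _ "1\<^sub>m 0"] exI[of _ X]) (auto simp: strict_upper_def)
next
  case (Suc m X)
  let ?N = "Suc m"
  have X: "X \<in> carrier_mat ?N ?N" by fact
  obtain v where v: "v \<in> carrier_vec ?N" "v \<noteq> 0\<^sub>v ?N" "X *\<^sub>v v = 0\<^sub>v ?N"
    using kernel_vec[OF X Suc.prems(2)] by auto
  obtain P0 Q0 where P0: "P0 \<in> carrier_mat ?N ?N" and Q0: "Q0 \<in> carrier_mat ?N ?N" and PQ0: "P0 * Q0 = 1\<^sub>m ?N"
    and QP0: "Q0 * P0 = 1\<^sub>m ?N" and cP0: "col P0 0 = v"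
    using first_col[OF v(1,2)] by blast
  define B where "B = Q0 * X * P0"
  have Bc: "B \<in> carrier_mat ?N ?N" unfolding B_def using P0 Q0 X by simp
  have colB: "col B 0 = 0\<^sub>v ?N"
  proof -
    have "col B 0 = (Q0 * X) *\<^sub>v col P0 0" unfolding B_def
      by (rule col_mult2[OF mult_carrier_mat[OF Q0 X] P0]) simp
    also have "\<dots> = Q0 *\<^sub>v (X *\<^sub>v col P0 0)" by (rule sq_assoc_vec[OF Q0 X], rule carrier_vecI) (use P0 in simp)
    also have "\<dots> = Q0 *\<^sub>v (X *\<^sub>v v)" unfolding cP0 ..
    also have "\<dots> = 0\<^sub>v ?N" unfolding v(3) by (rule mult_mat_vec_zero[OF Q0])
    finally show ?thesis .
  qed
  have B0: "B $$ (i, 0) = 0" if "i < ?N" for i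
  proof -
    have "B $$ (i, 0) = col B 0 $ i" using Bc that by simp
    thus ?thesis using colB that by simp
  qed
  define B2 :: "'a mat" where "B2 = mat 1 m (\<lambda>(i, j). B $$ (0, Suc j))"
  define B4 :: "'a mat" where "B4 = mat m m (\<lambda>(i, j). B $$ (Suc i, Suc j))"
  have B2: "B2 \<in> carrier_mat 1 m" and B4: "B4 \<in> carrier_mat m m" unfolding B2_def B4_def by auto
  have Bdec: "B = four_block_mat (0\<^sub>m 1 1) B2 (0\<^sub>m m 1) B4"
  proof (rule eq_matI)
    fix i j assume "i < dim_row (four_block_mat (0\<^sub>m 1 1) B2 (0\<^sub>m m 1) B4)" "j < dim_col (four_block_mat (0\<^sub>m 1 1) B2 (0\<^sub>m m 1) B4)"
    hence ij: "i < Suc m" "j < Suc m" using B2 B4 by auto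
    show "B $$ (i, j) = four_block_mat (0\<^sub>m 1 1) B2 (0\<^sub>m m 1) B4 $$ (i, j)"
      using ij B2 B4 B0 by (cases i; cases j) (auto simp: B2_def B4_def)
  qed (use Bc B2 B4 in auto)
  have Bpow: "B ^\<^sub>m k = 0\<^sub>m ?N ?N"
  proof -
    have "B ^\<^sub>m k = Q0 * X ^\<^sub>m k * P0" unfolding B_def by (rule pow_conj[OF Q0 P0 X QP0 PQ0])
    thus ?thesis using Suc.prems(2) Q0 P0 by simp
  qed
  obtain a Y where aY: "a \<in> carrier_mat 1 1" "Y \<in> carrier_mat 1 m"
    and e: "B ^\<^sub>m k = four_block_mat a Y (0\<^sub>m m 1) (B4 ^\<^sub>m k)"
    using fb_pow[OF B2 B4, of k] unfolding Bdec[symmetric] by blast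
  have B4pow: "B4 ^\<^sub>m k = 0\<^sub>m m m"
  proof (rule eq_matI)
    fix i j assume "i < dim_row (0\<^sub>m m m :: 'a mat)" "j < dim_col (0\<^sub>m m m :: 'a mat)"
    hence ij: "i < m" "j < m" by auto
    have "(B ^\<^sub>m k) $$ (Suc i, Suc j) = (B4 ^\<^sub>m k) $$ (i, j)" unfolding e using ij aY B4 by simp
    thus "(B4 ^\<^sub>m k) $$ (i, j) = (0\<^sub>m m m :: 'a mat) $$ (i, j)" unfolding Bpow using ij by simp
  qed (use B4 in auto)
  obtain P' Q' T' where P': "P' \<in> carrier_mat m m" and Q': "Q' \<in> carrier_mat m m" and T': "T' \<in> carrier_mat m m"
    and PQ': "P' * Q' = 1\<^sub>m m" and QP': "Q' * P' = 1\<^sub>m m" and B4e: "B4 = P' * T' * Q'" and su': "strict_upper m T'"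
    using Suc.IH[OF B4 B4pow] by blast
  define D1 :: "'a mat" where "D1 = four_block_mat (1\<^sub>m 1) (0\<^sub>m 1 m) (0\<^sub>m m 1) P'"
  define D2 :: "'a mat" where "D2 = four_block_mat (1\<^sub>m 1) (0\<^sub>m 1 m) (0\<^sub>m m 1) Q'"
  define T :: "'a mat" where "T = four_block_mat (0\<^sub>m 1 1) (B2 * P') (0\<^sub>m m 1) T'"
  have D1: "D1 \<in> carrier_mat ?N ?N" and D2: "D2 \<in> carrier_mat ?N ?N" and Tc: "T \<in> carrier_mat ?N ?N"
    unfolding D1_def D2_def T_def using P' Q' T' B2 by auto
  have D12: "D1 * D2 = 1\<^sub>m ?N" unfolding D1_def D2_def
    by (subst fb_mult) (use P' Q' PQ' in \<open>auto simp: one_fb\<close>)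
  have D21: "D2 * D1 = 1\<^sub>m ?N" unfolding D1_def D2_def
    by (subst fb_mult) (use P' Q' QP' in \<open>auto simp: one_fb\<close>)
  have "D1 * T = four_block_mat (0\<^sub>m 1 1) (B2 * P') (0\<^sub>m m 1) (P' * T')" unfolding D1_def T_def
    by (subst fb_mult) (use P' T' B2 in auto)
  hence "D1 * T * D2 = four_block_mat (0\<^sub>m 1 1) (B2 * P') (0\<^sub>m m 1) (P' * T') * four_block_mat (1\<^sub>m 1) (0\<^sub>m 1 m) (0\<^sub>m m 1) Q'"
    unfolding D2_def by simp
  also have "\<dots> = four_block_mat (0\<^sub>m 1 1 * 1\<^sub>m 1) (0\<^sub>m 1 1 * 0\<^sub>m 1 m + B2 * P' * Q') (0\<^sub>m m 1) (P' * T' * Q')"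
    by (rule fb_mult) (use P' T' Q' B2 in auto)
  also have "\<dots> = four_block_mat (0\<^sub>m 1 1) (B2 * P' * Q') (0\<^sub>m m 1) (P' * T' * Q')"
    using P' T' Q' B2 by simp
  also have "B2 * P' * Q' = B2" using B2 P' Q' PQ' by (simp add: assoc_mult_mat[of _ 1 m _ m _ m])
  finally have DTD: "D1 * T * D2 = B" unfolding B4e[symmetric] Bdec by simp
  have XB: "X = P0 * B * Q0"
  proof -
    have "P0 * B * Q0 = (P0 * Q0) * X * (P0 * Q0)" unfolding B_def using P0 Q0 X by (simp add: sq_assoc[of _ ?N])
    thus ?thesis using PQ0 X by simp
  qed
  define P where "P = P0 * D1"
  define Q where "Q = D2 * Q0"
  have Pc: "P \<in> carrier_mat ?N ?N" and Qc: "Q \<in> carrier_mat ?N ?N" unfolding P_def Q_def using P0 Q0 D1 D2 by auto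
  have "P * Q = P0 * (D1 * D2) * Q0" unfolding P_def Q_def using P0 Q0 D1 D2 by (simp add: sq_assoc[of _ ?N])
  hence PQ: "P * Q = 1\<^sub>m ?N" using D12 PQ0 P0 by simp
  have "Q * P = D2 * (Q0 * P0) * D1" unfolding P_def Q_def using P0 Q0 D1 D2 by (simp add: sq_assoc[of _ ?N])
  hence QP: "Q * P = 1\<^sub>m ?N" using D21 QP0 D2 by simp
  have XPTQ: "X = P * T * Q"
  proof -
    have "P * T * Q = P0 * (D1 * T * D2) * Q0" unfolding P_def Q_def using P0 Q0 D1 D2 Tc by (simp add: sq_assoc[of _ ?N])
    thus ?thesis using DTD XB by simp
  qed
  have su: "strict_upper ?N T" unfolding strict_upper_def
  proof (intro allI impI)
    fix i j assume ij: "i < ?N" "j < ?N" "j \<le> i"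
    show "T $$ (i, j) = 0"
    proof (cases "j = 0")
      case True thus ?thesis using ij T' B2 P' by (cases i) (auto simp: T_def)
    next
      case False
      then obtain j' where j': "j = Suc j'" by (cases j) auto
      then obtain i' where i': "i = Suc i'" using ij by (cases i) auto
      have "T $$ (i, j) = T' $$ (i', j')" unfolding T_def using ij i' j' T' B2 P' by simp
      thus ?thesis using su' ij i' j' unfolding strict_upper_def by auto
    qed
  qed
  show ?case using Pc Qc Tc PQ QP XPTQ su by blast
qed

lemma poly_prod_map: "poly (prod_list (map f xs)) y = prod_list (map (\<lambda>x. poly (f x) y) xs)"
  using poly_prod_list[of "map f xs" y] by (simp add: comp_def)

lemma nil_jordan: assumes X: "(X :: 'a::field mat) \<in> carrier_mat n n" and nil: "X ^\<^sub>m k = 0\<^sub>m n n"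
  shows "\<exists>mu. (\<forall>a\<in>set mu. 0 < a) \<and> sum_list mu = n \<and> similar_mat X (J_part mu)"
proof -
  obtain P Q T where P: "P \<in> carrier_mat n n" and Q: "Q \<in> carrier_mat n n" and Tc: "T \<in> carrier_mat n n"
    and PQ: "P * Q = 1\<^sub>m n" and QP: "Q * P = 1\<^sub>m n" and XT: "X = P * T * Q" and su: "strict_upper n T"
    using triang[OF X nil] by blast
  have dX: "dim_row X = n" using X by simp
  have simXT: "similar_mat X T" unfolding similar_mat_def similar_mat_wit_def Let_def dX
    using X P Q Tc PQ QP XT by blast
  have ut: "upper_triangular T" using su Tc unfolding strict_upper_def upper_triangular_def by auto
  define n_as where "n_as = triangular_to_jnf_vector T"
  have jT: "jordan_nf T n_as" unfolding n_as_def by (rule triangular_to_jnf_vector[OF Tc ut])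
  have jX: "jordan_nf X n_as" using jT simXT unfolding jordan_nf_def using similar_mat_trans by blast
  have diag: "diag_mat T = replicate n 0" using su Tc unfolding diag_mat_def strict_upper_def
    by (intro nth_equalityI) auto
  have cpT: "char_poly T = [:0, 1:] ^ n"
    unfolding char_poly_upper_triangular[OF Tc ut] diag by (simp add: prod_list_replicate)
  have cpX: "char_poly X = (\<Prod>(m, a)\<leftarrow>n_as. [:- a, 1:] ^ m)" by (rule jordan_nf_char_poly[OF jX])
  have ev0: "a = 0" if ka: "(m, a) \<in> set n_as" for m a
  proof (rule ccontr)
    assume a0: "a \<noteq> 0"
    have m0: "m \<noteq> 0" using jX ka unfolding jordan_nf_def by force
    have z: "poly ([:- a, 1:] ^ m) a = 0" using m0 by (simp add: poly_power zero_power)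
    have "0 \<in> (\<lambda>x. poly (case x of (m, a) \<Rightarrow> [:- a, 1:] ^ m) a) ` set n_as"
      by (rule rev_image_eqI[OF ka]) (use m0 z in simp)
    hence "poly (char_poly X) a = 0" unfolding cpX poly_prod_map prod_list_zero_iff by simp
    moreover have "poly (char_poly X) a = a ^ n" unfolding char_poly_similar[OF simXT] cpT by (simp add: poly_power)
    ultimately show False using a0 by simp
  qed
  define mu where "mu = map fst n_as"
  have nas: "n_as = map (\<lambda>a. (a, 0)) mu" unfolding mu_def map_map
    by (rule sym, rule map_idI) (auto simp: ev0)
  have jm: "jordan_matrix n_as = J_part mu" unfolding nas J_part_def ..
  have pos: "\<forall>a\<in>set mu. 0 < a" using jX unfolding jordan_nf_def mu_def by force
  have sim: "similar_mat X (J_part mu)" using jX unfolding jordan_nf_def jm by simp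
  from similar_matD[OF sim] obtain n' where "{X, J_part mu} \<subseteq> carrier_mat n' n'" by auto
  hence "dim_row X = n'" "dim_row (J_part mu :: 'a mat) = n'" by auto
  hence "sum_list mu = n" using X by simp
  thus ?thesis using pos sim by blast
qed

lemma exist_rep: assumes xw: "(X, w) \<in> (enh_nilcone n :: ('a::field mat \<times> 'a vec) set)"
  shows "\<exists>lam q. (lam, q) \<in> enhanced_partitions n \<and> orel n (J_part lam, u_vec n lam q) (X, w)"
proof -
  from xw obtain k where X: "X \<in> carrier_mat n n" and nil: "X ^\<^sub>m k = 0\<^sub>m n n" and w: "w \<in> carrier_vec n"
    unfolding enh_nilcone_def by auto
  obtain mu where pm: "\<forall>a\<in>set mu. 0 < a" and sm: "sum_list mu = n" and sim: "similar_mat X (J_part mu)"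
    using nil_jordan[OF X nil] by blast
  from similar_matD[OF sim] obtain n' P Q where cs: "{X, J_part mu, P, Q} \<subseteq> carrier_mat n' n'"
    and PQ: "P * Q = 1\<^sub>m n'" and QP: "Q * P = 1\<^sub>m n'" and XPQ: "X = P * J_part mu * Q" by blast
  have n': "n' = n" using cs X by auto
  have P: "P \<in> carrier_mat n n" and Q: "Q \<in> carrier_mat n n" and Jm: "(J_part mu :: 'a mat) \<in> carrier_mat n n"
    using cs n' by auto
  obtain lam A B where part: "is_partition n lam" and A: "A \<in> carrier_mat n n" and B: "B \<in> carrier_mat n n"
    and AB: "A * B = 1\<^sub>m n" and BA: "B * A = 1\<^sub>m n" and Jl: "(J_part lam :: 'a mat) = A * J_part mu * B"
    using sort_J[OF pm, where 'a='a] unfolding sm by blast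
  have Jlc: "(J_part lam :: 'a mat) \<in> carrier_mat n n" using Jl A B Jm by simp
  have Jmu: "J_part mu = B * J_part lam * A"
  proof -
    have "B * J_part lam * A = (B * A) * J_part mu * (B * A)" unfolding Jl using A B Jm by (simp add: sq_assoc[of _ n])
    thus ?thesis using BA Jm sm by simp
  qed
  define G where "G = P * B"
  define H where "H = A * Q"
  have G: "G \<in> carrier_mat n n" and H: "H \<in> carrier_mat n n" unfolding G_def H_def using P Q A B by auto
  have "G * H = P * (B * A) * Q" unfolding G_def H_def using P Q A B by (simp add: sq_assoc[of _ n])
  hence GH: "G * H = 1\<^sub>m n" using BA PQ n' P by simp
  have "H * G = A * (Q * P) * B" unfolding G_def H_def using P Q A B by (simp add: sq_assoc[of _ n])
  hence HG: "H * G = 1\<^sub>m n" using AB QP n' A by simp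
  have XG: "X = G * J_part lam * H"
  proof -
    have "G * J_part lam * H = P * (B * J_part lam * A) * Q" unfolding G_def H_def using P Q A B Jlc
      by (simp add: sq_assoc[of _ n])
    thus ?thesis using XPQ Jmu by simp
  qed
  have Hw: "H *\<^sub>v w \<in> carrier_vec n" using H w by simp
  have r1: "orel n (J_part lam, H *\<^sub>v w) (X, w)"
  proof (rule orelI[OF G H GH HG zero_carrier_vec XG])
    show "w = - (X *\<^sub>v 0\<^sub>v n) + G *\<^sub>v (H *\<^sub>v w)"
      unfolding inv_cancel_vec[OF GH G H w] using X w by (intro eq_vecI) auto
  qed
  obtain q where q: "q \<in> enh_q lam" and r2: "orel n (J_part lam, H *\<^sub>v w) (J_part lam :: 'a mat, u_vec n lam q)"
    using stepB[OF part Hw] by blast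
  have r3: "orel n (J_part lam, u_vec n lam q) (J_part lam, H *\<^sub>v w)" by (rule orel_sym[OF r2 Jlc Hw])
  have "orel n (J_part lam, u_vec n lam q) (X, w)" by (rule orel_trans[OF r3 r1 Jlc u_vec_carrier])
  moreover have "(lam, q) \<in> enhanced_partitions n" using part q by (simp add: enhanced_partitions_def)
  ultimately show ?thesis by blast
qed

theorem theorem3p5:
  fixes n :: nat
  assumes "alg_closed TYPE('a :: field)"
  shows "{enh_orbit n xw | xw. xw \<in> (enh_nilcone n :: ('a mat \<times> 'a vec) set)}
           = (\<lambda>(lam, q). (O_enh n lam q :: ('a mat \<times> 'a vec) set)) ` enhanced_partitions n
      \<and> inj_on (\<lambda>(lam, q). (O_enh n lam q :: ('a mat \<times> 'a vec) set)) (enhanced_partitions n)"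
proof (intro conjI)
  show "{enh_orbit n xw | xw. xw \<in> (enh_nilcone n :: ('a mat \<times> 'a vec) set)}
           = (\<lambda>(lam, q). (O_enh n lam q :: ('a mat \<times> 'a vec) set)) ` enhanced_partitions n"
  proof (intro equalityI subsetI)
    fix S assume "S \<in> {enh_orbit n xw | xw. xw \<in> (enh_nilcone n :: ('a mat \<times> 'a vec) set)}"
    then obtain X w where S: "S = enh_orbit n (X, w)" and xw: "(X, w) \<in> (enh_nilcone n :: ('a mat \<times> 'a vec) set)" by auto
    obtain lam q where ep: "(lam, q) \<in> enhanced_partitions n" and r: "orel n (J_part lam, u_vec n lam q) (X, w)"
      using exist_rep[OF xw] by blast
    have n: "n = sum_list lam" using ep by (simp add: enhanced_partitions_def is_partition_def)
    have "O_enh n lam q = enh_orbit n (X, w)" unfolding O_enh_def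
      by (rule orbit_eq[OF r]) (use J_part_dim[of lam] n u_vec_carrier in auto)
    thus "S \<in> (\<lambda>(lam, q). (O_enh n lam q :: ('a mat \<times> 'a vec) set)) ` enhanced_partitions n"
      using ep S by force
  next
    fix S assume "S \<in> (\<lambda>(lam, q). (O_enh n lam q :: ('a mat \<times> 'a vec) set)) ` enhanced_partitions n"
    then obtain lam q where ep: "(lam, q) \<in> enhanced_partitions n" and S: "S = O_enh n lam q" by auto
    have "(J_part lam, u_vec n lam q) \<in> (enh_nilcone n :: ('a mat \<times> 'a vec) set)" by (rule EP_nilcone[OF ep])
    thus "S \<in> {enh_orbit n xw | xw. xw \<in> (enh_nilcone n :: ('a mat \<times> 'a vec) set)}"
      unfolding S O_enh_def by blast
  qed
next
  show "inj_on (\<lambda>(lam, q). (O_enh n lam q :: ('a mat \<times> 'a vec) set)) (enhanced_partitions n)"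
  proof (rule inj_onI, clarify)
    fix lam q mu p
    assume e1: "(lam, q) \<in> enhanced_partitions n" and e2: "(mu, p) \<in> enhanced_partitions n"
      and eq: "(O_enh n lam q :: ('a mat \<times> 'a vec) set) = O_enh n mu p"
    have l: "is_partition n lam" and ql: "q \<in> enh_q lam" using e1 by (auto simp: enhanced_partitions_def)
    have m: "is_partition n mu" and pm: "p \<in> enh_q mu" using e2 by (auto simp: enhanced_partitions_def)
    have nl: "n = sum_list lam" and nm: "n = sum_list mu" using l m by (auto simp: is_partition_def)
    have Jl: "(J_part lam :: 'a mat) \<in> carrier_mat n n" and Jm: "(J_part mu :: 'a mat) \<in> carrier_mat n n"
      using J_part_dim nl nm by auto
    have "orel n (J_part mu, u_vec n mu p) (J_part mu :: 'a mat, u_vec n mu p)"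
      by (rule orel_refl[OF Jm u_vec_carrier])
    hence "(J_part mu, u_vec n mu p) \<in> (O_enh n mu p :: ('a mat \<times> 'a vec) set)"
      unfolding O_enh_def enh_orbit_orel by simp
    hence "(J_part mu, u_vec n mu p) \<in> (O_enh n lam q :: ('a mat \<times> 'a vec) set)" using eq by simp
    hence r: "orel n (J_part lam, u_vec n lam q) (J_part mu :: 'a mat, u_vec n mu p)"
      unfolding O_enh_def enh_orbit_orel by simp
    have "similar_mat (J_part mu :: 'a mat) (J_part lam)" by (rule orel_similar[OF r Jl])
    hence mul: "mu = lam" by (rule part_unique[OF m l])
    have pl: "\<forall>a\<in>set lam. 0 < a" using l by (auto simp: is_partition_def)
    have "invset n (J_part lam :: 'a mat) (u_vec n lam q) = invset n (J_part lam :: 'a mat) (u_vec n lam p)"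
      using invset_eq[OF r Jl u_vec_carrier] mul by simp
    hence "{k. beta lam q \<le> k} = {k. beta lam p \<le> k}"
      using invset_J[OF pl nl, where 'a='a, of q] invset_J[OF pl nl, where 'a='a, of p] by simp
    hence "beta lam q = beta lam p" by (metis (mono_tags) mem_Collect_eq order_refl le_antisym)
    hence "q = p" by (rule beta_inj[OF l ql pm[unfolded mul]])
    thus "lam = mu \<and> q = p" using mul by simp
  qed
qed

end
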